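(* Let $R=k[x_1,\dots,x_n]$ be a polynomial ring over a field $k$, and let $I$ be a monomial ideal of $R$ such that for every $F\in\mathcal F(I)$ the primary component $I_F$ is generated by monomials of one and the same degree $d_F$. Then $I^{(t)}$ is integrally closed for all $t\gg 0$ if and only if for every $F\in\mathcal F(I)$ the ideal $I_F$ contains the monomials $x_i^{d_F-1}x_j$ for all $i,j\notin F$.
   Context: For $F\subseteq[n]=\{1,\dots,n\}$, $P_F$ is the ideal generated by the variables $x_i$ with $i\notin F$. $\mathcal F(I)$ is the set of all $F\subseteq[n]$ such that $P_F$ is a minimal prime of $I$, and for $F\in\mathcal F(I)$, $I_F$ denotes the primary component of $I$ associated with $P_F$. The $t$-th symbolic power $I^{(t)}$ is the intersection of the primary components of $I^t$ associated with the minimal primes of $I$. *)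

theory Defs
  imports Main "HOL-Library.Poly_Mapping"
begin

definition is_ideal :: "'a::comm_ring_1 set \<Rightarrow> bool" where
  "is_ideal I \<longleftrightarrow> 0 \<in> I \<and> (\<forall>a\<in>I. \<forall>b\<in>I. a + b \<in> I) \<and> (\<forall>r. \<forall>a\<in>I. r * a \<in> I)"

definition ideal_gen :: "'a::comm_ring_1 set \<Rightarrow> 'a set" where
  "ideal_gen S = \<Inter>{J. is_ideal J \<and> S \<subseteq> J}"

definition ideal_prod :: "'a::comm_ring_1 set \<Rightarrow> 'a set \<Rightarrow> 'a set" where
  "ideal_prod I J = ideal_gen {a * b | a b. a \<in> I \<and> b \<in> J}"

fun ideal_pow :: "'a::comm_ring_1 set \<Rightarrow> nat \<Rightarrow> 'a set" where
  "ideal_pow I 0 = UNIV"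
| "ideal_pow I (Suc t) = ideal_prod I (ideal_pow I t)"

definition prime_ideal :: "'a::comm_ring_1 set \<Rightarrow> bool" where
  "prime_ideal P \<longleftrightarrow> is_ideal P \<and> P \<noteq> UNIV \<and> (\<forall>a b. a * b \<in> P \<longrightarrow> a \<in> P \<or> b \<in> P)"

definition primary_ideal :: "'a::comm_ring_1 set \<Rightarrow> bool" where
  "primary_ideal Q \<longleftrightarrow> is_ideal Q \<and> Q \<noteq> UNIV \<and>
     (\<forall>a b. a * b \<in> Q \<longrightarrow> a \<in> Q \<or> (\<exists>m. b ^ m \<in> Q))"

definition ideal_radical :: "'a::comm_ring_1 set \<Rightarrow> 'a set" where
  "ideal_radical I = {a. \<exists>m. a ^ m \<in> I}"

definition minimal_prime :: "'a::comm_ring_1 set \<Rightarrow> 'a set \<Rightarrow> bool" where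
  "minimal_prime P I \<longleftrightarrow> prime_ideal P \<and> I \<subseteq> P \<and>
     (\<forall>P'. prime_ideal P' \<and> I \<subseteq> P' \<and> P' \<subseteq> P \<longrightarrow> P' = P)"

definition minimal_primary_decomposition :: "'a::comm_ring_1 set \<Rightarrow> 'a set set \<Rightarrow> bool" where
  "minimal_primary_decomposition I Qs \<longleftrightarrow> finite Qs \<and> (\<forall>Q\<in>Qs. primary_ideal Q) \<and>
     \<Inter>Qs = I \<and>
     (\<forall>Q\<in>Qs. \<forall>Q'\<in>Qs. ideal_radical Q = ideal_radical Q' \<longrightarrow> Q = Q') \<and>
     (\<forall>Q\<in>Qs. \<Inter>(Qs - {Q}) \<noteq> I)"

definition primary_component :: "'a::comm_ring_1 set \<Rightarrow> 'a set \<Rightarrow> 'a set" where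
  "primary_component I P = (THE Q. \<exists>Qs. minimal_primary_decomposition I Qs \<and> Q \<in> Qs \<and>
      ideal_radical Q = P)"

definition integral_over_ideal :: "'a::comm_ring_1 set \<Rightarrow> 'a \<Rightarrow> bool" where
  "integral_over_ideal I f \<longleftrightarrow> (\<exists>m\<ge>1. \<exists>c. (\<forall>i\<in>{1..m}. c i \<in> ideal_pow I i) \<and>
      f ^ m + (\<Sum>i=1..m. c i * f ^ (m - i)) = 0)"

definition integral_closure :: "'a::comm_ring_1 set \<Rightarrow> 'a set" where
  "integral_closure I = {f. integral_over_ideal I f}"

definition integrally_closed :: "'a::comm_ring_1 set \<Rightarrow> bool" where
  "integrally_closed I \<longleftrightarrow> integral_closure I = I"

definition symbolic_power :: "'a::comm_ring_1 set \<Rightarrow> nat \<Rightarrow> 'a set" where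
  "symbolic_power I t = \<Inter>{primary_component (ideal_pow I t) P | P. minimal_prime P I}"

section \<open>The polynomial ring k[x_v : v in 'v] for a finite variable type 'v
  (so n = CARD('v) and [n] is identified with UNIV :: 'v set)\<close>

type_synonym ('v, 'k) mpoly = "('v \<Rightarrow>\<^sub>0 nat) \<Rightarrow>\<^sub>0 'k"

definition monom :: "('v \<Rightarrow>\<^sub>0 nat) \<Rightarrow> ('v, 'k::field) mpoly" where
  "monom a = Poly_Mapping.single a 1"

definition var :: "'v \<Rightarrow> ('v, 'k::field) mpoly" where
  "var i = monom (Poly_Mapping.single i 1)"

definition monom_deg :: "('v::finite \<Rightarrow>\<^sub>0 nat) \<Rightarrow> nat" where
  "monom_deg a = (\<Sum>i\<in>UNIV. Poly_Mapping.lookup a i)"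

definition monomial_ideal :: "('v, 'k::field) mpoly set \<Rightarrow> bool" where
  "monomial_ideal I \<longleftrightarrow> (\<exists>A. I = ideal_gen (monom ` A))"

definition P_ideal :: "'v set \<Rightarrow> ('v, 'k::field) mpoly set" where
  "P_ideal F = ideal_gen (var ` (- F))"

definition calF :: "('v, 'k::field) mpoly set \<Rightarrow> 'v set set" where
  "calF I = {F. minimal_prime (P_ideal F) I}"

definition I_comp :: "('v, 'k::field) mpoly set \<Rightarrow> 'v set \<Rightarrow> ('v, 'k) mpoly set" where
  "I_comp I F = primary_component I (P_ideal F)"

end

theory Submission
  imports Defs
begin

lemma ideal_0: "is_ideal I \<Longrightarrow> 0 \<in> I"
  by (simp add: is_ideal_def)
lemma ideal_add: "is_ideal I \<Longrightarrow> a \<in> I \<Longrightarrow> b \<in> I \<Longrightarrow> a + b \<in> I"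
  by (simp add: is_ideal_def)
lemma ideal_mult_left: "is_ideal I \<Longrightarrow> a \<in> I \<Longrightarrow> r * a \<in> I"
  by (simp add: is_ideal_def)
lemma ideal_mult_right: "is_ideal I \<Longrightarrow> a \<in> I \<Longrightarrow> a * r \<in> I"
  by (metis ideal_mult_left mult.commute)
lemma ideal_uminus: "is_ideal I \<Longrightarrow> a \<in> I \<Longrightarrow> - a \<in> I"
  by (metis ideal_mult_left mult_minus1)
lemma ideal_diff: "is_ideal I \<Longrightarrow> a \<in> I \<Longrightarrow> b \<in> I \<Longrightarrow> a - b \<in> I"
  by (metis ideal_add ideal_uminus diff_conv_add_uminus)
lemma ideal_sum: "is_ideal I \<Longrightarrow> (\<And>x. x \<in> X \<Longrightarrow> f x \<in> I) \<Longrightarrow> sum f X \<in> I"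
  apply (induction X rule: infinite_finite_induct)
  by (auto simp: ideal_0 ideal_add)
lemma ideal_UNIV: "is_ideal UNIV"
  by (simp add: is_ideal_def)
lemma ideal_Inter: "(\<And>J. J \<in> K \<Longrightarrow> is_ideal J) \<Longrightarrow> is_ideal (\<Inter>K)"
  by (simp add: is_ideal_def)

lemma ideal_gen_ideal: "is_ideal (ideal_gen S)"
  unfolding ideal_gen_def by (rule ideal_Inter) auto
lemma ideal_gen_sub: "S \<subseteq> ideal_gen S"
  unfolding ideal_gen_def by auto
lemma ideal_gen_least: "is_ideal J \<Longrightarrow> S \<subseteq> J \<Longrightarrow> ideal_gen S \<subseteq> J"
  unfolding ideal_gen_def by auto
lemma ideal_gen_mono: "S \<subseteq> T \<Longrightarrow> ideal_gen S \<subseteq> ideal_gen T"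
  by (rule ideal_gen_least[OF ideal_gen_ideal]) (use ideal_gen_sub in blast)

lemma ideal_prod_ideal: "is_ideal (ideal_prod I J)"
  unfolding ideal_prod_def by (rule ideal_gen_ideal)
lemma ideal_prod_mem: "a \<in> I \<Longrightarrow> b \<in> J \<Longrightarrow> a * b \<in> ideal_prod I J"
  unfolding ideal_prod_def
  by (rule subsetD[OF ideal_gen_sub]) (rule CollectI, intro exI conjI, rule refl, assumption+)
lemma ideal_prod_sub: "is_ideal I \<Longrightarrow> ideal_prod I J \<subseteq> I"
  unfolding ideal_prod_def
proof (rule ideal_gen_least)
  assume "is_ideal I"
  then show "{a * b |a b. a \<in> I \<and> b \<in> J} \<subseteq> I"
    using ideal_mult_right by fastforce
qed
lemma ideal_prod_mono: "I \<subseteq> I' \<Longrightarrow> J \<subseteq> J' \<Longrightarrow> ideal_prod I J \<subseteq> ideal_prod I' J'"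
  unfolding ideal_prod_def
proof (rule ideal_gen_mono)
  assume "I \<subseteq> I'" "J \<subseteq> J'"
  then show "{a * b |a b. a \<in> I \<and> b \<in> J} \<subseteq> {a * b |a b. a \<in> I' \<and> b \<in> J'}"
    by fastforce
qed

lemma ideal_pow_ideal: "is_ideal (ideal_pow I t)"
  by (cases t) (simp_all add: ideal_UNIV ideal_prod_ideal)
lemma ideal_pow_mem_power: "a \<in> I \<Longrightarrow> a ^ t \<in> ideal_pow I t"
  by (induction t) (auto intro: ideal_prod_mem)
lemma ideal_pow_Suc_mem: "a \<in> I \<Longrightarrow> b \<in> ideal_pow I t \<Longrightarrow> a * b \<in> ideal_pow I (Suc t)"
  by (simp add: ideal_prod_mem)
lemma ideal_pow_sub: "is_ideal I \<Longrightarrow> t \<ge> 1 \<Longrightarrow> ideal_pow I t \<subseteq> I"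
  by (cases t) (auto dest: ideal_prod_sub)
lemma ideal_pow_mono: "I \<subseteq> J \<Longrightarrow> ideal_pow I t \<subseteq> ideal_pow J t"
  by (induction t) (simp_all add: ideal_prod_mono)

lemma integral_closure_mono: "I \<subseteq> J \<Longrightarrow> integral_closure I \<subseteq> integral_closure J"
  unfolding integral_closure_def integral_over_ideal_def
  using ideal_pow_mono by blast

lemma ideal_sub_integral_closure:
  assumes "is_ideal I" shows "I \<subseteq> integral_closure I"
proof
  fix f assume f: "f \<in> I"
  have "- f \<in> I" using f assms by (rule ideal_uminus[rotated])
  then have "- f * 1 \<in> ideal_pow I 1"
    by (simp only: One_nat_def ideal_pow.simps) (rule ideal_prod_mem, auto)
  then have "- f \<in> ideal_pow I 1" by simp
  then show "f \<in> integral_closure I"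
    unfolding integral_closure_def integral_over_ideal_def
    by (intro CollectI exI[of _ 1] conjI exI[of _ "\<lambda>_. - f"]) auto
qed

lemma integrally_closed_Inter:
  assumes "\<And>J. J \<in> K \<Longrightarrow> integrally_closed J \<and> is_ideal J"
  shows "integrally_closed (\<Inter>K)"
proof -
  have "integral_closure (\<Inter>K) \<subseteq> \<Inter>K"
  proof
    fix f assume f: "f \<in> integral_closure (\<Inter>K)"
    show "f \<in> \<Inter>K"
    proof
      fix J assume J: "J \<in> K"
      then have "integral_closure (\<Inter>K) \<subseteq> integral_closure J"
        by (intro integral_closure_mono) auto
      with f J assms show "f \<in> J" unfolding integrally_closed_def by auto
    qed
  qed
  moreover have "\<Inter>K \<subseteq> integral_closure (\<Inter>K)"
    using assms by (intro ideal_sub_integral_closure ideal_Inter) auto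
  ultimately show ?thesis unfolding integrally_closed_def by auto
qed

lemma ideal_power_mono_mem:
  assumes "is_ideal Q" "a ^ m \<in> Q" "m \<le> n" shows "a ^ n \<in> Q"
proof -
  have "a ^ n = a ^ (n - m) * a ^ m" using assms(3) by (simp add: power_add[symmetric])
  then show ?thesis using assms ideal_mult_left by metis
qed

lemma radical_ideal:
  assumes "is_ideal Q" shows "is_ideal (ideal_radical Q)"
  unfolding is_ideal_def ideal_radical_def
proof (intro conjI ballI allI; clarsimp?)
  show "\<exists>m. 0 ^ m \<in> Q" using assms by (intro exI[of _ 1]) (simp add: ideal_0)
next
  fix a b m n assume am: "a ^ m \<in> Q" and bn: "b ^ n \<in> Q"
  have "(a + b) ^ (m + n) = (\<Sum>k\<le>m + n. of_nat ((m + n) choose k) * a ^ k * b ^ (m + n - k))"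
    by (simp add: binomial_ring)
  also have "\<dots> \<in> Q"
  proof (rule ideal_sum[OF assms])
    fix k assume "k \<in> {..m + n}"
    show "of_nat ((m + n) choose k) * a ^ k * b ^ (m + n - k) \<in> Q"
    proof (cases "m \<le> k")
      case True
      then have "a ^ k \<in> Q" using ideal_power_mono_mem[OF assms am] by auto
      then show ?thesis by (metis assms ideal_mult_left ideal_mult_right mult.assoc)
    next
      case False
      then have "b ^ (m + n - k) \<in> Q" using ideal_power_mono_mem[OF assms bn] by auto
      then show ?thesis by (metis assms ideal_mult_left)
    qed
  qed
  finally show "\<exists>m. (a + b) ^ m \<in> Q" by blast
next
  fix r a m assume "a ^ m \<in> Q"
  then have "(r * a) ^ m \<in> Q" by (simp add: power_mult_distrib assms ideal_mult_left)
  then show "\<exists>m. (r * a) ^ m \<in> Q" by blast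
qed

lemma radical_primary_prime:
  assumes "primary_ideal Q" shows "prime_ideal (ideal_radical Q)"
proof -
  have Q: "is_ideal Q" "Q \<noteq> UNIV" and pr: "\<And>a b. a * b \<in> Q \<Longrightarrow> a \<in> Q \<or> (\<exists>m. b ^ m \<in> Q)"
    using assms unfolding primary_ideal_def by auto
  have "1 \<notin> Q" using Q by (metis UNIV_I ideal_mult_left mult.right_neutral subsetI subset_antisym)
  then have "1 \<notin> ideal_radical Q" unfolding ideal_radical_def by auto
  then have "ideal_radical Q \<noteq> UNIV" by auto
  moreover have "a \<in> ideal_radical Q \<or> b \<in> ideal_radical Q" if ab: "a * b \<in> ideal_radical Q" for a b
  proof -
    obtain m where "(a * b) ^ m \<in> Q" using ab unfolding ideal_radical_def by auto
    then have "a ^ m * b ^ m \<in> Q" by (simp add: power_mult_distrib)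
    then have "a ^ m \<in> Q \<or> (\<exists>k. (b ^ m) ^ k \<in> Q)" using pr by blast
    then show ?thesis unfolding ideal_radical_def by (auto simp: power_mult[symmetric])
  qed
  ultimately show ?thesis using radical_ideal[OF Q(1)] unfolding prime_ideal_def by auto
qed

lemma radical_sup: "is_ideal Q \<Longrightarrow> Q \<subseteq> ideal_radical Q"
  unfolding ideal_radical_def by (auto intro: exI[of _ 1])

lemma prime_one_notin: "prime_ideal P \<Longrightarrow> 1 \<notin> P"
  unfolding prime_ideal_def by (metis UNIV_eq_I ideal_mult_left mult.right_neutral)

lemma prime_prod_notin:
  assumes "prime_ideal P" "finite X" "\<And>x. x \<in> X \<Longrightarrow> f x \<notin> P"
  shows "prod f X \<notin> P"
  using assms(2,3)
proof (induction X rule: finite_induct)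
  case empty then show ?case using prime_one_notin[OF assms(1)] by simp
next
  case (insert x X) then show ?case using assms(1) unfolding prime_ideal_def by auto
qed

lemma prime_power_mem: "prime_ideal P \<Longrightarrow> a ^ m \<in> P \<Longrightarrow> a \<in> P"
  by (induction m) (auto simp: prime_one_notin prime_ideal_def)

lemma radical_sub_prime: "prime_ideal P \<Longrightarrow> Q \<subseteq> P \<Longrightarrow> ideal_radical Q \<subseteq> P"
  unfolding ideal_radical_def using prime_power_mem by blast

section \<open>Primary components at minimal primes\<close>

definition sat :: "'a::comm_ring_1 set \<Rightarrow> 'a set \<Rightarrow> 'a set" where
  "sat J P = {f. \<exists>s. s \<notin> P \<and> s * f \<in> J}"

lemma minimal_prime_in_decomp:
  assumes mp: "minimal_prime P J" and fin: "finite Qs" and pq: "\<forall>Q\<in>Qs. primary_ideal Q"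
    and int: "\<Inter>Qs = J"
  shows "\<exists>Q\<in>Qs. ideal_radical Q = P"
proof -
  have P: "prime_ideal P" "J \<subseteq> P" using mp unfolding minimal_prime_def by auto
  have "\<exists>Q\<in>Qs. Q \<subseteq> P"
  proof (rule ccontr)
    assume "\<not> ?thesis"
    then have "\<forall>Q\<in>Qs. \<exists>q. q \<in> Q \<and> q \<notin> P" by auto
    then have "\<exists>q. \<forall>Q\<in>Qs. q Q \<in> Q \<and> q Q \<notin> P" by (rule bchoice)
    then obtain q where q: "\<forall>Q\<in>Qs. q Q \<in> Q \<and> q Q \<notin> P" by blast
    have "prod q Qs \<notin> P" using prime_prod_notin[OF P(1) fin] q by blast
    moreover have "prod q Qs \<in> Q" if "Q \<in> Qs" for Q
    proof -
      have "prod q Qs = q Q * prod q (Qs - {Q})" using that fin by (simp add: prod.remove)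
      moreover have "is_ideal Q" using pq that unfolding primary_ideal_def by auto
      ultimately show ?thesis using q that ideal_mult_right by metis
    qed
    then have "prod q Qs \<in> J" using int by blast
    ultimately show False using P(2) by blast
  qed
  then obtain Q where Q: "Q \<in> Qs" "Q \<subseteq> P" by auto
  have "ideal_radical Q \<subseteq> P" using radical_sub_prime[OF P(1) Q(2)] .
  moreover have "prime_ideal (ideal_radical Q)" using pq Q radical_primary_prime by auto
  moreover have "is_ideal Q" using pq Q unfolding primary_ideal_def by auto
  then have "J \<subseteq> ideal_radical Q" using int Q radical_sup by blast
  ultimately have "ideal_radical Q = P" using mp unfolding minimal_prime_def by blast
  then show ?thesis using Q by blast
qed

lemma component_eq_sat:
  assumes mp: "minimal_prime P J" and mpd: "minimal_primary_decomposition J Qs"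
    and Q: "Q \<in> Qs" "ideal_radical Q = P"
  shows "Q = sat J P"
proof -
  have fin: "finite Qs" and pq: "\<forall>Q\<in>Qs. primary_ideal Q" and int: "\<Inter>Qs = J"
    and dist: "\<forall>Q\<in>Qs. \<forall>Q'\<in>Qs. ideal_radical Q = ideal_radical Q' \<longrightarrow> Q = Q'"
    using mpd unfolding minimal_primary_decomposition_def by auto
  have P: "prime_ideal P" "J \<subseteq> P" using mp unfolding minimal_prime_def by auto
  have Qi: "is_ideal Q" using pq Q unfolding primary_ideal_def by auto
  show ?thesis
  proof
    show "sat J P \<subseteq> Q"
    proof
      fix f assume "f \<in> sat J P"
      then obtain s where s: "s \<notin> P" "s * f \<in> J" unfolding sat_def by auto
      then have "f * s \<in> Q" using int Q by (auto simp: mult.commute)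
      then have "f \<in> Q \<or> (\<exists>m. s ^ m \<in> Q)" using pq Q unfolding primary_ideal_def by auto
      moreover have "\<not> (\<exists>m. s ^ m \<in> Q)" using s(1) Q(2) unfolding ideal_radical_def by auto
      ultimately show "f \<in> Q" by auto
    qed
  next
    show "Q \<subseteq> sat J P"
    proof
      fix f assume f: "f \<in> Q"
      have "\<exists>q. q \<in> Q' \<and> q \<notin> P" if Q': "Q' \<in> Qs - {Q}" for Q'
      proof (rule ccontr)
        assume "\<not> ?thesis"
        then have "Q' \<subseteq> P" by auto
        then have "ideal_radical Q' \<subseteq> P" using radical_sub_prime[OF P(1)] by auto
        moreover have "prime_ideal (ideal_radical Q')" using pq Q' radical_primary_prime by auto
        moreover have "is_ideal Q'" using pq Q' unfolding primary_ideal_def by auto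
        then have "J \<subseteq> ideal_radical Q'" using int Q' radical_sup by blast
        ultimately have "ideal_radical Q' = P" using mp unfolding minimal_prime_def by blast
        then show False using dist Q Q' by blast
      qed
      then have "\<forall>Q'\<in>Qs - {Q}. \<exists>q. q \<in> Q' \<and> q \<notin> P" by blast
      then have "\<exists>q. \<forall>Q'\<in>Qs - {Q}. q Q' \<in> Q' \<and> q Q' \<notin> P" by (rule bchoice)
      then obtain q where q: "\<And>Q'. Q' \<in> Qs - {Q} \<Longrightarrow> q Q' \<in> Q' \<and> q Q' \<notin> P" by blast
      define s where "s = prod q (Qs - {Q})"
      have "s \<notin> P" unfolding s_def using prime_prod_notin[OF P(1)] fin q by auto
      moreover have "s * f \<in> Q'" if "Q' \<in> Qs" for Q'
      proof (cases "Q' = Q")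
        case True then show ?thesis using f Qi ideal_mult_left by auto
      next
        case False
        then have "s = q Q' * prod q (Qs - {Q} - {Q'})" unfolding s_def using that fin
          by (simp add: prod.remove)
        moreover have "is_ideal Q'" using pq that unfolding primary_ideal_def by auto
        moreover have "q Q' \<in> Q'" using q[of Q'] that False by blast
        ultimately show ?thesis using ideal_mult_right by metis
      qed
      then have "s * f \<in> J" using int by blast
      ultimately show "f \<in> sat J P" unfolding sat_def by blast
    qed
  qed
qed

lemma primary_component_eq_sat:
  assumes mp: "minimal_prime P J" and ex: "\<exists>Qs. minimal_primary_decomposition J Qs"
  shows "primary_component J P = sat J P"
proof -
  obtain Qs where mpd: "minimal_primary_decomposition J Qs" using ex by auto
  then obtain Q where Q: "Q \<in> Qs" "ideal_radical Q = P"
    using minimal_prime_in_decomp[OF mp] unfolding minimal_primary_decomposition_def by blast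
  have "Q = sat J P" using component_eq_sat[OF mp mpd Q] .
  show ?thesis unfolding primary_component_def
  proof (rule the_equality)
    show "\<exists>Qs. minimal_primary_decomposition J Qs \<and> sat J P \<in> Qs \<and> ideal_radical (sat J P) = P"
      using mpd Q \<open>Q = sat J P\<close> by auto
  next
    fix Q' assume "\<exists>Qs. minimal_primary_decomposition J Qs \<and> Q' \<in> Qs \<and> ideal_radical Q' = P"
    then show "Q' = sat J P" using component_eq_sat[OF mp] by blast
  qed
qed

lemma primary_component_radical:
  assumes mp: "minimal_prime P J" and ex: "\<exists>Qs. minimal_primary_decomposition J Qs"
  shows "ideal_radical (sat J P) = P" "primary_ideal (sat J P)"
proof -
  obtain Qs where mpd: "minimal_primary_decomposition J Qs" using ex by auto
  then obtain Q where Q: "Q \<in> Qs" "ideal_radical Q = P"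
    using minimal_prime_in_decomp[OF mp] unfolding minimal_primary_decomposition_def by blast
  have "Q = sat J P" using component_eq_sat[OF mp mpd Q] .
  then show "ideal_radical (sat J P) = P" "primary_ideal (sat J P)"
    using Q mpd unfolding minimal_primary_decomposition_def by auto
qed

lemma exists_mpd:
  assumes fin: "finite Qs0" and pq: "\<forall>Q\<in>Qs0. primary_ideal Q" and int: "\<Inter>Qs0 = J"
    and dist: "\<forall>Q\<in>Qs0. \<forall>Q'\<in>Qs0. ideal_radical Q = ideal_radical Q' \<longrightarrow> Q = Q'"
  shows "\<exists>Qs. minimal_primary_decomposition J Qs"
proof -
  define C where "C = {Qs. Qs \<subseteq> Qs0 \<and> \<Inter>Qs = J}"
  have "Qs0 \<in> C" using int unfolding C_def by auto
  obtain Qs where Qs: "Qs \<in> C" "\<And>Qs'. Qs' \<in> C \<Longrightarrow> card Qs \<le> card Qs'"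
    using ex_has_least_nat[of "\<lambda>Qs. Qs \<in> C" Qs0 card] \<open>Qs0 \<in> C\<close> by auto
  have sub: "Qs \<subseteq> Qs0" and I: "\<Inter>Qs = J" using Qs(1) unfolding C_def by auto
  have finQ: "finite Qs" using sub fin finite_subset by auto
  have "\<Inter>(Qs - {Q}) \<noteq> J" if "Q \<in> Qs" for Q
  proof
    assume "\<Inter>(Qs - {Q}) = J"
    then have "Qs - {Q} \<in> C" using sub unfolding C_def by auto
    then have "card Qs \<le> card (Qs - {Q})" using Qs(2) by auto
    moreover have "card (Qs - {Q}) < card Qs" using that finQ by (rule card_Diff1_less[rotated])
    ultimately show False by auto
  qed
  then have "minimal_primary_decomposition J Qs"
    unfolding minimal_primary_decomposition_def using finQ sub pq I dist by blast
  then show ?thesis by blast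
qed


section \<open>Monomial ideals as sets of exponents\<close>

type_synonym 'v expo = "'v \<Rightarrow>\<^sub>0 nat"

definition MI :: "'v expo set \<Rightarrow> ('v, 'k::field) mpoly set" where
  "MI S = {f. Poly_Mapping.keys f \<subseteq> S}"

definition upc :: "'v expo set \<Rightarrow> bool" where
  "upc S \<longleftrightarrow> (\<forall>a\<in>S. \<forall>c. a + c \<in> S)"

definition up :: "'v expo set \<Rightarrow> 'v expo set" where
  "up A = {a + c | a c. a \<in> A}"

definition sump :: "'v expo set \<Rightarrow> 'v expo set \<Rightarrow> 'v expo set" where
  "sump S T = {a + b | a b. a \<in> S \<and> b \<in> T}"

fun pw :: "'v expo set \<Rightarrow> nat \<Rightarrow> 'v expo set" where
  "pw S 0 = UNIV"
| "pw S (Suc t) = sump S (pw S t)"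

lemma upcD: "upc S \<Longrightarrow> a \<in> S \<Longrightarrow> a + c \<in> S"
  unfolding upc_def by blast

lemma upc_up: "upc (up A)"
  unfolding upc_def up_def by (auto simp: add.assoc) (metis add.assoc)

lemma sub_up: "A \<subseteq> up A"
proof
  fix x assume "x \<in> A" then show "x \<in> up A" unfolding up_def by (metis (mono_tags) CollectI add.right_neutral)
qed

lemma up_upc: "upc S \<Longrightarrow> up S = S"
  using sub_up[of S] unfolding up_def upc_def by blast

lemma up_mono: "A \<subseteq> B \<Longrightarrow> up A \<subseteq> up B"
  unfolding up_def by blast

lemma upc_sump: "upc S \<Longrightarrow> upc (sump S T)"
  unfolding upc_def sump_def
proof (clarify)
  fix a b c assume S: "\<forall>a\<in>S. \<forall>c. a + c \<in> S" and ab: "a \<in> S" "b \<in> T"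
  have "a + b + c = (a + c) + b" by (simp add: ac_simps)
  moreover have "a + c \<in> S" using S ab by blast
  ultimately show "\<exists>a' b'. a + b + c = a' + b' \<and> a' \<in> S \<and> b' \<in> T" using ab by blast
qed

lemma upc_UNIV: "upc UNIV"
  by (simp add: upc_def)

lemma upc_pw: "upc S \<Longrightarrow> upc (pw S t)"
  by (cases t) (simp_all add: upc_UNIV upc_sump)

lemma upc_Inter: "(\<And>S. S \<in> K \<Longrightarrow> upc S) \<Longrightarrow> upc (\<Inter>K)"
  unfolding upc_def by blast

lemma MI_ideal:
  assumes "upc S" shows "is_ideal (MI S :: ('v, 'k::field) mpoly set)"
proof -
  have "Poly_Mapping.keys (a + b) \<subseteq> S" if "Poly_Mapping.keys a \<subseteq> S" "Poly_Mapping.keys b \<subseteq> S"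
    for a b :: "('v, 'k) mpoly"
    using keys_add[of a b] that by blast
  moreover have "Poly_Mapping.keys (r * a) \<subseteq> S" if a: "Poly_Mapping.keys a \<subseteq> S" for r a :: "('v, 'k) mpoly"
  proof
    fix x assume "x \<in> Poly_Mapping.keys (r * a)"
    then obtain u v where "x = u + v" "u \<in> Poly_Mapping.keys r" "v \<in> Poly_Mapping.keys a"
      using keys_mult[of r a] by blast
    then show "x \<in> S" using a upcD[OF assms, of v u] by (auto simp: add.commute)
  qed
  ultimately show ?thesis unfolding is_ideal_def MI_def by auto
qed

lemma MI_UNIV: "MI UNIV = UNIV"
  unfolding MI_def by auto

lemma MI_mono: "S \<subseteq> T \<Longrightarrow> MI S \<subseteq> MI T"
  unfolding MI_def by auto

lemma MI_Inter: "MI (\<Inter>K) = \<Inter>(MI ` K)"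
  unfolding MI_def by auto

lemma MI_Int: "MI (S \<inter> T) = MI S \<inter> MI T"
  unfolding MI_def by auto

lemma keys_monom: "Poly_Mapping.keys (monom a :: ('v, 'k::field) mpoly) = {a}"
  unfolding monom_def by simp

lemma monom_in_MI: "(monom a :: ('v, 'k::field) mpoly) \<in> MI S \<longleftrightarrow> a \<in> S"
  unfolding MI_def by (simp add: keys_monom)

lemma MI_inj:
  assumes "(MI S :: ('v, 'k::field) mpoly set) = MI T" shows "S = T"
proof -
  have "a \<in> S \<longleftrightarrow> a \<in> T" for a
    using monom_in_MI[of a S, where 'k='k] monom_in_MI[of a T, where 'k='k] assms by auto
  then show ?thesis by auto
qed

lemma monom_mult: "monom a * monom b = (monom (a + b) :: ('v, 'k::field) mpoly)"
  unfolding monom_def by (simp add: mult_single)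

lemma monom_0: "monom 0 = (1 :: ('v, 'k::field) mpoly)"
  unfolding monom_def by (simp add: one_poly_mapping_def)

lemma single_as_monom: "Poly_Mapping.single a c = Poly_Mapping.single 0 c * (monom a :: ('v, 'k::field) mpoly)"
  unfolding monom_def by (simp add: mult_single)

lemma poly_expansion:
  "f = (\<Sum>a\<in>Poly_Mapping.keys f. Poly_Mapping.single a (Poly_Mapping.lookup f a))"
proof (rule poly_mapping_eqI)
  fix k
  have "(\<Sum>a\<in>Poly_Mapping.keys f. Poly_Mapping.lookup (Poly_Mapping.single a (Poly_Mapping.lookup f a)) k)
      = (\<Sum>a\<in>Poly_Mapping.keys f. if a = k then Poly_Mapping.lookup f a else 0)"
    by (intro sum.cong) (auto simp: lookup_single when_def)
  also have "\<dots> = Poly_Mapping.lookup f k"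
    by (simp add: in_keys_iff)
  finally show "Poly_Mapping.lookup f k = Poly_Mapping.lookup (\<Sum>a\<in>Poly_Mapping.keys f. Poly_Mapping.single a (Poly_Mapping.lookup f a)) k"
    by (simp add: lookup_sum)
qed

lemma ideal_gen_monom:
  "ideal_gen (monom ` A) = (MI (up A) :: ('v, 'k::field) mpoly set)"
proof
  show "ideal_gen (monom ` A) \<subseteq> (MI (up A) :: ('v, 'k::field) mpoly set)"
    by (rule ideal_gen_least[OF MI_ideal[OF upc_up]])
       (auto simp: monom_in_MI intro: subsetD[OF sub_up])
next
  show "(MI (up A) :: ('v, 'k::field) mpoly set) \<subseteq> ideal_gen (monom ` A)"
  proof
    fix f :: "('v, 'k) mpoly" assume f: "f \<in> MI (up A)"
    have "Poly_Mapping.single a (Poly_Mapping.lookup f a) \<in> ideal_gen (monom ` A)"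
      if a: "a \<in> Poly_Mapping.keys f" for a
    proof -
      obtain b c where bc: "a = b + c" "b \<in> A" using f a unfolding MI_def up_def by blast
      have "Poly_Mapping.single a (Poly_Mapping.lookup f a)
          = (Poly_Mapping.single 0 (Poly_Mapping.lookup f a) * monom c) * monom b"
        by (simp add: bc single_as_monom[of "b + c"] monom_mult[symmetric] ac_simps)
      moreover have "monom b \<in> ideal_gen (monom ` A)" using bc(2) ideal_gen_sub by blast
      ultimately show ?thesis using ideal_mult_left[OF ideal_gen_ideal] by metis
    qed
    then have "(\<Sum>a\<in>Poly_Mapping.keys f. Poly_Mapping.single a (Poly_Mapping.lookup f a)) \<in> ideal_gen (monom ` A)"
      by (intro ideal_sum[OF ideal_gen_ideal])
    then show "f \<in> ideal_gen (monom ` A)" using poly_expansion[of f] by simp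
  qed
qed

lemma MI_as_gen: "upc S \<Longrightarrow> (MI S :: ('v, 'k::field) mpoly set) = ideal_gen (monom ` S)"
  by (simp add: ideal_gen_monom up_upc)

lemma ideal_prod_MI:
  assumes S: "upc S" and T: "upc T"
  shows "ideal_prod (MI S) (MI T) = (MI (sump S T) :: ('v, 'k::field) mpoly set)"
proof
  show "ideal_prod (MI S) (MI T) \<subseteq> (MI (sump S T) :: ('v, 'k::field) mpoly set)"
    unfolding ideal_prod_def
  proof (rule ideal_gen_least[OF MI_ideal[OF upc_sump[OF S]]])
    show "{a * b |a b. a \<in> MI S \<and> b \<in> MI T} \<subseteq> (MI (sump S T) :: ('v, 'k::field) mpoly set)"
    proof clarify
      fix a b :: "('v, 'k) mpoly" assume a: "a \<in> MI S" and b: "b \<in> MI T"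
      show "a * b \<in> MI (sump S T)"
        unfolding MI_def
      proof (rule CollectI, rule subsetI)
        fix x assume "x \<in> Poly_Mapping.keys (a * b)"
        then obtain u v where "x = u + v" "u \<in> Poly_Mapping.keys a" "v \<in> Poly_Mapping.keys b"
          using keys_mult[of a b] by blast
        then show "x \<in> sump S T" using a b unfolding MI_def sump_def by blast
      qed
    qed
  qed
next
  have "MI (sump S T) = (ideal_gen (monom ` sump S T) :: ('v, 'k::field) mpoly set)"
    by (rule MI_as_gen[OF upc_sump[OF S]])
  also have "\<dots> \<subseteq> ideal_prod (MI S) (MI T)"
  proof (rule ideal_gen_least[OF ideal_prod_ideal])
    show "monom ` sump S T \<subseteq> ideal_prod (MI S) (MI T :: ('v, 'k::field) mpoly set)"
    proof clarify
      fix x assume "x \<in> sump S T"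
      then obtain u v where "x = u + v" "u \<in> S" "v \<in> T" unfolding sump_def by blast
      then show "monom x \<in> ideal_prod (MI S) (MI T :: ('v, 'k::field) mpoly set)"
        using ideal_prod_mem[of "monom u" "MI S" "monom v" "MI T"]
        by (simp add: monom_in_MI monom_mult)
    qed
  qed
  finally show "MI (sump S T) \<subseteq> ideal_prod (MI S) (MI T :: ('v, 'k::field) mpoly set)" .
qed

lemma ideal_pow_MI:
  assumes "upc S" shows "ideal_pow (MI S) t = (MI (pw S t) :: ('v, 'k::field) mpoly set)"
  by (induction t) (simp_all add: MI_UNIV ideal_prod_MI assms upc_pw)

lemma monomial_idealE:
  assumes "monomial_ideal (I :: ('v, 'k::field) mpoly set)"
  obtains S where "upc S" "I = MI S"
  using assms unfolding monomial_ideal_def by (auto simp: ideal_gen_monom intro: upc_up)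


definition mk :: "('v::finite \<Rightarrow> nat) \<Rightarrow> 'v expo" where
  "mk f = Abs_poly_mapping f"

lemma lookup_mk [simp]: "Poly_Mapping.lookup (mk f) = f"
  unfolding mk_def by (rule lookup_Abs_poly_mapping) simp

lemma expo_eqI: "(\<And>i. Poly_Mapping.lookup a i = Poly_Mapping.lookup b i) \<Longrightarrow> a = b"
  by (rule poly_mapping_eqI)

definition degW :: "'v set \<Rightarrow> 'v expo \<Rightarrow> nat" where
  "degW W a = (\<Sum>i\<in>W. Poly_Mapping.lookup a i)"

lemma degW_add: "degW W (a + b) = degW W a + degW W b"
  unfolding degW_def by (simp add: lookup_add sum.distrib)

lemma degW_0 [simp]: "degW W 0 = 0"
  unfolding degW_def by simp

definition nsm :: "nat \<Rightarrow> 'v::finite expo \<Rightarrow> 'v expo" where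
  "nsm m a = mk (\<lambda>i. m * Poly_Mapping.lookup a i)"

lemma nsm_Suc: "nsm (Suc m) a = a + nsm m a"
  unfolding nsm_def by (rule expo_eqI) (simp add: lookup_add)

lemma nsm_0 [simp]: "nsm 0 a = 0"
  unfolding nsm_def by (rule expo_eqI) simp

lemma lookup_nsm [simp]: "Poly_Mapping.lookup (nsm m a) i = m * Poly_Mapping.lookup a i"
  unfolding nsm_def by simp

lemma degW_nsm: "degW W (nsm m a) = m * degW W a"
  unfolding degW_def by (simp add: sum_distrib_left)

definition enc :: "'v::finite \<Rightarrow> nat" where
  "enc = (SOME f. inj f)"

lemma inj_enc: "inj (enc :: 'v::finite \<Rightarrow> nat)"
proof -
  obtain f :: "'v \<Rightarrow> nat" and n where "inj_on f UNIV"
    using finite_imp_inj_to_nat_seg[of "UNIV :: 'v set"] by auto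
  then have "\<exists>f :: 'v \<Rightarrow> nat. inj f" by blast
  then show ?thesis unfolding enc_def by (rule someI_ex)
qed

section \<open>Weighted lexicographic order on exponents\<close>

definition psi :: "'v set \<Rightarrow> 'v::finite expo \<Rightarrow> (nat \<Rightarrow>\<^sub>0 nat)" where
  "psi W a = Poly_Mapping.single 0 (degW W a) + (\<Sum>i\<in>UNIV. Poly_Mapping.single (Suc (enc i)) (Poly_Mapping.lookup a i))"

lemma psi_add: "psi W (a + b) = psi W a + psi W b"
  unfolding psi_def by (simp add: degW_add lookup_add single_add sum.distrib ac_simps)

lemma lookup_psi_Suc: "Poly_Mapping.lookup (psi W a) (Suc (enc i)) = Poly_Mapping.lookup a i"
proof -
  have "(\<Sum>j\<in>UNIV. Poly_Mapping.lookup (Poly_Mapping.single (Suc (enc j)) (Poly_Mapping.lookup a j)) (Suc (enc i)))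
      = (\<Sum>j\<in>UNIV. if j = i then Poly_Mapping.lookup a j else 0)"
    by (intro sum.cong) (auto simp: lookup_single when_def inj_eq[OF inj_enc])
  then show ?thesis unfolding psi_def by (simp add: lookup_add lookup_sum lookup_single)
qed

lemma lookup_psi_0: "Poly_Mapping.lookup (psi W a) 0 = degW W a"
  unfolding psi_def by (simp add: lookup_add lookup_sum lookup_single)

lemma inj_psi: "inj (psi W :: 'v::finite expo \<Rightarrow> _)"
proof (rule injI)
  fix a b :: "'v expo" assume "psi W a = psi W b"
  then show "a = b" using lookup_psi_Suc[of W a] lookup_psi_Suc[of W b] by (intro expo_eqI) metis
qed

lemma psi_less_deg:
  assumes "degW W a < degW W b" shows "psi W a < psi W b"
proof -
  have "less_fun (Poly_Mapping.lookup (psi W a)) (Poly_Mapping.lookup (psi W b))"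
    by (rule less_funI, rule exI[of _ 0]) (simp add: lookup_psi_0 assms)
  then show ?thesis by (simp add: less_poly_mapping.rep_eq)
qed

definition is_min :: "('v expo \<Rightarrow> (nat \<Rightarrow>\<^sub>0 nat)) \<Rightarrow> ('v, 'k::field) mpoly \<Rightarrow> 'v expo \<Rightarrow> bool" where
  "is_min \<psi> f a \<longleftrightarrow> a \<in> Poly_Mapping.keys f \<and> (\<forall>b\<in>Poly_Mapping.keys f. \<psi> a \<le> \<psi> b)"

lemma exists_min:
  assumes "f \<noteq> 0" shows "\<exists>a. is_min \<psi> f a"
proof -
  have ne: "Poly_Mapping.keys f \<noteq> {}" using assms by simp
  have "finite (\<psi> ` Poly_Mapping.keys f)" by simp
  then have "Min (\<psi> ` Poly_Mapping.keys f) \<in> \<psi> ` Poly_Mapping.keys f"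
    using ne by (intro Min_in) auto
  then obtain a where a: "a \<in> Poly_Mapping.keys f" "\<psi> a = Min (\<psi> ` Poly_Mapping.keys f)" by auto
  have "\<forall>b\<in>Poly_Mapping.keys f. \<psi> a \<le> \<psi> b" using a(2) by simp
  then show ?thesis using a(1) unfolding is_min_def by blast
qed

lemma min_mult:
  fixes f g :: "('v, 'k::field) mpoly" and \<psi> :: "'v expo \<Rightarrow> (nat \<Rightarrow>\<^sub>0 nat)"
  assumes inj: "inj \<psi>" and add: "\<And>x y. \<psi> (x + y) = \<psi> x + \<psi> y"
    and fa: "is_min \<psi> f a" and gb: "is_min \<psi> g b"
  shows "Poly_Mapping.lookup (f * g) (a + b) = Poly_Mapping.lookup f a * Poly_Mapping.lookup g b"
    and "is_min \<psi> (f * g) (a + b)"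
proof -
  define ca where "ca = Poly_Mapping.lookup f a"
  define cb where "cb = Poly_Mapping.lookup g b"
  define f' where "f' = f - Poly_Mapping.single a ca"
  define g' where "g' = g - Poly_Mapping.single b cb"
  have kf': "Poly_Mapping.keys f' \<subseteq> Poly_Mapping.keys f - {a}"
    unfolding f'_def ca_def by (auto simp: in_keys_iff lookup_minus lookup_single when_def split: if_splits)
  have kg': "Poly_Mapping.keys g' \<subseteq> Poly_Mapping.keys g - {b}"
    unfolding g'_def cb_def by (auto simp: in_keys_iff lookup_minus lookup_single when_def split: if_splits)
  have fg: "f * g = Poly_Mapping.single (a + b) (ca * cb) + Poly_Mapping.single a ca * g'
      + f' * Poly_Mapping.single b cb + f' * g'"
    unfolding f'_def g'_def by (simp add: algebra_simps mult_single)
  have z1: "Poly_Mapping.lookup (Poly_Mapping.single a ca * g') (a + b) = 0"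
  proof -
    have "a + b \<notin> Poly_Mapping.keys (Poly_Mapping.single a ca * g')"
    proof
      assume "a + b \<in> Poly_Mapping.keys (Poly_Mapping.single a ca * g')"
      then obtain u v where "a + b = u + v" "u \<in> Poly_Mapping.keys (Poly_Mapping.single a ca)" "v \<in> Poly_Mapping.keys g'"
        using keys_mult by blast
      then show False using kg' by (auto split: if_splits)
    qed
    then show ?thesis by (simp add: in_keys_iff)
  qed
  have z2: "Poly_Mapping.lookup (f' * Poly_Mapping.single b cb) (a + b) = 0"
  proof -
    have "a + b \<notin> Poly_Mapping.keys (f' * Poly_Mapping.single b cb)"
    proof
      assume "a + b \<in> Poly_Mapping.keys (f' * Poly_Mapping.single b cb)"
      then obtain u v where "a + b = u + v" "u \<in> Poly_Mapping.keys f'" "v \<in> Poly_Mapping.keys (Poly_Mapping.single b cb)"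
        using keys_mult by blast
      then show False using kf' by (auto split: if_splits)
    qed
    then show ?thesis by (simp add: in_keys_iff)
  qed
  have z3: "Poly_Mapping.lookup (f' * g') (a + b) = 0"
  proof -
    have "a + b \<notin> Poly_Mapping.keys (f' * g')"
    proof
      assume "a + b \<in> Poly_Mapping.keys (f' * g')"
      then obtain u v where uv: "a + b = u + v" "u \<in> Poly_Mapping.keys f'" "v \<in> Poly_Mapping.keys g'"
        using keys_mult by blast
      then have "u \<in> Poly_Mapping.keys f" "u \<noteq> a" "v \<in> Poly_Mapping.keys g" "v \<noteq> b" using kf' kg' by auto
      then have "\<psi> a < \<psi> u" "\<psi> b \<le> \<psi> v" using fa gb inj unfolding is_min_def
        by (auto simp: order_le_less inj_eq)
      then have "\<psi> a + \<psi> b < \<psi> u + \<psi> v" by (rule add_less_le_mono)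
      moreover have "\<psi> u + \<psi> v = \<psi> a + \<psi> b" using uv(1) add by metis
      ultimately show False by simp
    qed
    then show ?thesis by (simp add: in_keys_iff)
  qed
  show lk: "Poly_Mapping.lookup (f * g) (a + b) = Poly_Mapping.lookup f a * Poly_Mapping.lookup g b"
    unfolding fg lookup_add z1 z2 z3 by (simp add: ca_def cb_def)
  have "Poly_Mapping.lookup f a \<noteq> 0" "Poly_Mapping.lookup g b \<noteq> 0"
    using fa gb unfolding is_min_def by (auto simp: in_keys_iff)
  then have "a + b \<in> Poly_Mapping.keys (f * g)" using lk by (simp add: in_keys_iff)
  moreover have "\<psi> (a + b) \<le> \<psi> w" if w: "w \<in> Poly_Mapping.keys (f * g)" for w
  proof -
    obtain u v where "w = u + v" "u \<in> Poly_Mapping.keys f" "v \<in> Poly_Mapping.keys g"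
      using keys_mult[of f g] w by blast
    then have "\<psi> a \<le> \<psi> u" "\<psi> b \<le> \<psi> v" using fa gb unfolding is_min_def by auto
    then show ?thesis using add \<open>w = u + v\<close> by (simp add: add_mono)
  qed
  ultimately show "is_min \<psi> (f * g) (a + b)" unfolding is_min_def by blast
qed

lemma min_power:
  fixes f :: "('v::finite, 'k::field) mpoly"
  assumes inj: "inj \<psi>" and add: "\<And>x y. \<psi> (x + y) = \<psi> x + \<psi> y" and fa: "is_min \<psi> f a"
  shows "is_min \<psi> (f ^ Suc m) (nsm (Suc m) a)"
proof (induction m)
  case 0 then show ?case using fa by (simp add: nsm_Suc)
next
  case (Suc m)
  have "is_min \<psi> (f * f ^ Suc m) (a + nsm (Suc m) a)" by (rule min_mult(2)[OF inj add fa Suc])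
  then show ?case by (simp add: nsm_Suc[of "Suc m"])
qed


definition ev :: "'v \<Rightarrow> 'v expo" where
  "ev i = Poly_Mapping.single i 1"

lemma lookup_ev: "Poly_Mapping.lookup (ev i) j = (if i = j then 1 else 0)"
  unfolding ev_def by (simp add: lookup_single when_def)

lemma var_monom: "var i = monom (ev i)"
  unfolding var_def ev_def ..

definition Z :: "'v set \<Rightarrow> 'v expo set" where
  "Z F = {a. \<exists>i. i \<notin> F \<and> 0 < Poly_Mapping.lookup a i}"

definition Fsupp :: "'v set \<Rightarrow> 'v expo set" where
  "Fsupp F = {c. \<forall>i. i \<notin> F \<longrightarrow> Poly_Mapping.lookup c i = 0}"

definition finv :: "'v set \<Rightarrow> 'v expo set \<Rightarrow> bool" where
  "finv F T \<longleftrightarrow> (\<forall>a c. c \<in> Fsupp F \<longrightarrow> a + c \<in> T \<longrightarrow> a \<in> T)"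

definition satS :: "'v set \<Rightarrow> 'v expo set \<Rightarrow> 'v expo set" where
  "satS F S = {a. \<exists>c\<in>Fsupp F. a + c \<in> S}"

lemma le_expo:
  fixes a b :: "'v expo"
  assumes "\<And>i. Poly_Mapping.lookup a i \<le> Poly_Mapping.lookup b i"
  shows "b = a + (b - a)"
proof (rule expo_eqI)
  fix i show "Poly_Mapping.lookup b i = Poly_Mapping.lookup (a + (b - a)) i"
    using assms[of i] by (simp add: lookup_add lookup_minus)
qed

lemma Fsupp_add: "a \<in> Fsupp F \<Longrightarrow> b \<in> Fsupp F \<Longrightarrow> a + b \<in> Fsupp F"
  unfolding Fsupp_def by (simp add: lookup_add)

lemma Fsupp_0: "0 \<in> Fsupp F"
  unfolding Fsupp_def by simp

lemma Fsupp_sum: "(\<And>x. x \<in> X \<Longrightarrow> c x \<in> Fsupp F) \<Longrightarrow> sum c X \<in> Fsupp F"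
  by (induction X rule: infinite_finite_induct) (auto simp: Fsupp_0 Fsupp_add)

lemma Z_degW: "a \<in> Z (F :: 'v::finite set) \<longleftrightarrow> 0 < degW (-F) a"
proof -
  have "degW (-F) a = 0 \<longleftrightarrow> (\<forall>i\<in>-F. Poly_Mapping.lookup a i = 0)"
    unfolding degW_def by (rule sum_eq_0_iff) simp
  then show ?thesis unfolding Z_def by auto
qed

lemma not_Z_Fsupp: "a \<notin> Z F \<longleftrightarrow> a \<in> Fsupp F"
  unfolding Z_def Fsupp_def by auto

lemma upc_Z: "upc (Z F)"
  unfolding upc_def Z_def by (auto simp: lookup_add)

lemma finv_Z: "finv F (Z F)"
  unfolding finv_def Z_def Fsupp_def by (auto simp: lookup_add)

lemma up_ev: "up (ev ` (- F)) = Z F"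
proof
  show "up (ev ` (- F)) \<subseteq> Z F"
    unfolding up_def Z_def by (auto simp: lookup_add lookup_ev)
next
  show "Z F \<subseteq> up (ev ` (- F))"
  proof
    fix a assume "a \<in> Z F"
    then obtain i where i: "i \<notin> F" "0 < Poly_Mapping.lookup a i" unfolding Z_def by auto
    have "a = ev i + (a - ev i)"
      by (rule le_expo) (use i in \<open>auto simp: lookup_ev\<close>)
    then show "a \<in> up (ev ` (- F))" unfolding up_def using i by blast
  qed
qed

lemma P_ideal_MI: "P_ideal F = (MI (Z F) :: ('v, 'k::field) mpoly set)"
proof -
  have "var ` (- F) = (monom ` (ev ` (- F)) :: ('v, 'k) mpoly set)"
    by (auto simp: var_monom)
  then show ?thesis unfolding P_ideal_def by (simp add: ideal_gen_monom up_ev)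
qed

lemma restrict_parts:
  fixes f :: "('v, 'k::field) mpoly"
  obtains f1 f2 where "f = f1 + f2" "Poly_Mapping.keys f1 \<subseteq> T" "\<And>a. a \<in> Poly_Mapping.keys f2 \<Longrightarrow> a \<notin> T"
proof -
  define f1 where "f1 = (\<Sum>a\<in>Poly_Mapping.keys f \<inter> T. Poly_Mapping.single a (Poly_Mapping.lookup f a))"
  have l1: "Poly_Mapping.lookup f1 k = (if k \<in> T then Poly_Mapping.lookup f k else 0)" for k
  proof -
    have "Poly_Mapping.lookup f1 k = (\<Sum>a\<in>Poly_Mapping.keys f \<inter> T. if a = k then Poly_Mapping.lookup f a else 0)"
      unfolding f1_def lookup_sum by (intro sum.cong) (auto simp: lookup_single when_def)
    also have "\<dots> = (if k \<in> T then Poly_Mapping.lookup f k else 0)"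
      by (auto simp: in_keys_iff)
    finally show ?thesis .
  qed
  show ?thesis
  proof (rule that[of f1 "f - f1"])
    show "f = f1 + (f - f1)" by simp
    show "Poly_Mapping.keys f1 \<subseteq> T" using l1 by (auto simp: in_keys_iff split: if_splits)
    show "a \<notin> T" if "a \<in> Poly_Mapping.keys (f - f1)" for a
      using that l1[of a] by (auto simp: in_keys_iff lookup_minus)
  qed
qed

lemma invariance:
  fixes s f :: "('v::finite, 'k::field) mpoly"
  assumes T: "upc T" "finv F T" and s: "s \<notin> MI (Z F)" and sf: "s * f \<in> MI T"
  shows "f \<in> MI T"
proof -
  obtain f1 f2 where f12: "f = f1 + f2" "Poly_Mapping.keys f1 \<subseteq> T"
      "\<And>a. a \<in> Poly_Mapping.keys f2 \<Longrightarrow> a \<notin> T"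
    using restrict_parts[of f T] by blast
  have f1T: "f1 \<in> MI T" using f12(2) unfolding MI_def by auto
  have "f2 = 0"
  proof (rule ccontr)
    assume f2: "f2 \<noteq> 0"
    have "s \<noteq> 0" using s MI_ideal[OF upc_Z, of F] ideal_0 by metis
    obtain b0 where b0: "is_min (psi (-F)) s b0" using exists_min \<open>s \<noteq> 0\<close> by blast
    obtain a0 where a0: "is_min (psi (-F)) f2 a0" using exists_min f2 by blast
    obtain b1 where b1: "b1 \<in> Poly_Mapping.keys s" "b1 \<notin> Z F" using s unfolding MI_def by auto
    have "b0 \<notin> Z F"
    proof
      assume "b0 \<in> Z F"
      then have "degW (-F) b1 < degW (-F) b0" using b1(2) Z_degW[of b0 F] Z_degW[of b1 F] by simp
      then have "psi (-F) b1 < psi (-F) b0" by (rule psi_less_deg)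
      then show False using b0 b1(1) unfolding is_min_def by (simp add: leD)
    qed
    then have b0F: "b0 \<in> Fsupp F" by (simp add: not_Z_Fsupp)
    have "is_min (psi (-F)) (s * f2) (b0 + a0)"
      by (rule min_mult(2)[OF inj_psi psi_add b0 a0])
    then have k: "b0 + a0 \<in> Poly_Mapping.keys (s * f2)" unfolding is_min_def by auto
    have "s * f2 = s * f - s * f1" using f12(1) by (simp add: algebra_simps)
    moreover have "s * f1 \<in> MI T" using f1T MI_ideal[OF T(1)] ideal_mult_left by blast
    ultimately have "s * f2 \<in> MI T" using sf MI_ideal[OF T(1)] ideal_diff by metis
    then have "a0 + b0 \<in> T" using k unfolding MI_def by (auto simp: add.commute)
    then have "a0 \<in> T" using T(2) b0F unfolding finv_def by blast
    moreover have "a0 \<in> Poly_Mapping.keys f2" using a0 unfolding is_min_def by auto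
    ultimately show False using f12(3) by blast
  qed
  then show ?thesis using f1T f12(1) by simp
qed

lemma zero_notin_Z: "0 \<notin> Z F"
  unfolding Z_def by simp

lemma one_notin_MI: "0 \<notin> T \<Longrightarrow> (1 :: ('v, 'k::field) mpoly) \<notin> MI T"
  using monom_in_MI[of 0 T] by (simp add: monom_0)

lemma P_prime: "prime_ideal (P_ideal F :: ('v::finite, 'k::field) mpoly set)"
  unfolding prime_ideal_def P_ideal_MI
proof (intro conjI allI impI)
  show "is_ideal (MI (Z F) :: ('v, 'k) mpoly set)" by (rule MI_ideal[OF upc_Z])
  show "MI (Z F) \<noteq> (UNIV :: ('v, 'k) mpoly set)" using one_notin_MI[OF zero_notin_Z] by blast
  fix a b :: "('v, 'k) mpoly" assume "a * b \<in> MI (Z F)"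
  then show "a \<in> MI (Z F) \<or> b \<in> MI (Z F)" using invariance[OF upc_Z finv_Z, where s=a and f=b] by blast
qed

lemma upc_satS: "upc S \<Longrightarrow> upc (satS F S)"
  unfolding upc_def satS_def
proof clarify
  fix a c' c assume S: "\<forall>a\<in>S. \<forall>c. a + c \<in> S" and c: "c \<in> Fsupp F" "a + c \<in> S"
  have "a + c' + c = (a + c) + c'" by (simp add: ac_simps)
  then have "a + c' + c \<in> S" using S c by metis
  then show "\<exists>c\<in>Fsupp F. a + c' + c \<in> S" using c by blast
qed

lemma finv_satS: "finv F (satS F S)"
  unfolding finv_def satS_def by (auto simp: add.assoc intro: Fsupp_add)

lemma sub_satS: "S \<subseteq> satS F S"
  unfolding satS_def using Fsupp_0 by force

lemma sat_MI:
  assumes S: "upc S"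
  shows "sat (MI S) (P_ideal F) = (MI (satS F S) :: ('v::finite, 'k::field) mpoly set)"
proof
  show "sat (MI S) (P_ideal F) \<subseteq> (MI (satS F S) :: ('v, 'k) mpoly set)"
  proof
    fix f :: "('v, 'k) mpoly" assume "f \<in> sat (MI S) (P_ideal F)"
    then obtain s where s: "s \<notin> MI (Z F)" "s * f \<in> MI S" unfolding sat_def P_ideal_MI by auto
    have "s * f \<in> MI (satS F S)" using s(2) MI_mono[OF sub_satS] by blast
    then show "f \<in> MI (satS F S)" by (rule invariance[OF upc_satS[OF S] finv_satS s(1)])
  qed
next
  show "MI (satS F S) \<subseteq> (sat (MI S) (P_ideal F) :: ('v, 'k) mpoly set)"
  proof
    fix f :: "('v, 'k) mpoly" assume f: "f \<in> MI (satS F S)"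
    have "\<forall>a\<in>Poly_Mapping.keys f. \<exists>c. c \<in> Fsupp F \<and> a + c \<in> S" using f unfolding MI_def satS_def by blast
    then obtain c where c: "\<And>a. a \<in> Poly_Mapping.keys f \<Longrightarrow> c a \<in> Fsupp F \<and> a + c a \<in> S"
      by metis
    define C where "C = sum c (Poly_Mapping.keys f)"
    have CF: "C \<in> Fsupp F" unfolding C_def using c by (intro Fsupp_sum) auto
    then have "monom C \<notin> (MI (Z F) :: ('v, 'k) mpoly set)"
      by (simp add: monom_in_MI not_Z_Fsupp)
    moreover have "monom C * f \<in> MI S"
      unfolding MI_def
    proof (rule CollectI, rule subsetI)
      fix x assume "x \<in> Poly_Mapping.keys (monom C * f)"
      then obtain u v where "x = u + v" "u \<in> Poly_Mapping.keys (monom C :: ('v, 'k) mpoly)" "v \<in> Poly_Mapping.keys f"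
        using keys_mult by blast
      then have x: "x = C + v" "v \<in> Poly_Mapping.keys f" by (auto simp: keys_monom)
      have "C = c v + sum c (Poly_Mapping.keys f - {v})"
        unfolding C_def using x(2) by (simp add: sum.remove)
      then have "x = (v + c v) + sum c (Poly_Mapping.keys f - {v})" using x(1) by (simp add: ac_simps)
      then show "x \<in> S" using c[OF x(2)] upcD[OF S] by metis
    qed
    ultimately show "f \<in> sat (MI S) (P_ideal F)" unfolding sat_def P_ideal_MI by blast
  qed
qed


lemma keys_mult_degW:
  fixes f g :: "('v::finite, 'k::field) mpoly"
  assumes "Poly_Mapping.keys f \<subseteq> {a. p \<le> degW W a}" "Poly_Mapping.keys g \<subseteq> {a. q \<le> degW W a}"
  shows "Poly_Mapping.keys (f * g) \<subseteq> {a. p + q \<le> degW W a}"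
proof
  fix x assume "x \<in> Poly_Mapping.keys (f * g)"
  then obtain u v where "x = u + v" "u \<in> Poly_Mapping.keys f" "v \<in> Poly_Mapping.keys g"
    using keys_mult by blast
  moreover have "p \<le> degW W u" "q \<le> degW W v" using assms calculation by auto
  ultimately show "x \<in> {a. p + q \<le> degW W a}" by (simp add: degW_add add_mono)
qed

lemma keys_power_degW:
  fixes f :: "('v::finite, 'k::field) mpoly"
  assumes "Poly_Mapping.keys f \<subseteq> {a. p \<le> degW W a}"
  shows "Poly_Mapping.keys (f ^ m) \<subseteq> {a. m * p \<le> degW W a}"
proof (induction m)
  case 0
  have "Poly_Mapping.keys (1 :: ('v, 'k) mpoly) \<subseteq> {0}" by simp
  then show ?case by auto
next
  case (Suc m)
  have "Poly_Mapping.keys (f * f ^ m) \<subseteq> {a. p + m * p \<le> degW W a}"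
    by (rule keys_mult_degW[OF assms Suc])
  then show ?case by simp
qed

lemma nsm_ev_le:
  assumes "N \<le> Poly_Mapping.lookup a i"
  shows "a = nsm N (ev i) + (a - nsm N (ev i))"
  by (rule le_expo) (use assms in \<open>auto simp: lookup_ev\<close>)

lemma MI_primary:
  fixes T :: "'v::finite expo set"
  assumes T: "upc T" "finv F T" "0 \<notin> T" and pw: "\<And>i. i \<notin> F \<Longrightarrow> \<exists>N. nsm N (ev i) \<in> T"
  shows "primary_ideal (MI T :: ('v, 'k::field) mpoly set)"
    and "ideal_radical (MI T :: ('v, 'k::field) mpoly set) = P_ideal F"
proof -
  obtain Nf where Nf: "\<And>i. i \<notin> F \<Longrightarrow> nsm (Nf i) (ev i) \<in> T" using pw by metis
  define M where "M = Suc (\<Sum>i\<in>-F. Nf i)"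
  have powin: "b ^ M \<in> MI T" if b: "b \<in> (MI (Z F) :: ('v, 'k) mpoly set)" for b
  proof -
    have "Poly_Mapping.keys b \<subseteq> {a. 1 \<le> degW (-F) a}"
      using b unfolding MI_def by (auto simp: Z_degW)
    then have kb: "Poly_Mapping.keys (b ^ M) \<subseteq> {a. M \<le> degW (-F) a}"
      using keys_power_degW[of b 1 "-F" M] by simp
    show ?thesis unfolding MI_def
    proof (rule CollectI, rule subsetI)
      fix a assume "a \<in> Poly_Mapping.keys (b ^ M)"
      then have aM: "M \<le> degW (-F) a" using kb by auto
      have "\<exists>i\<in>-F. Nf i \<le> Poly_Mapping.lookup a i"
      proof (rule ccontr)
        assume "\<not> ?thesis"
        then have "\<forall>i\<in>-F. Poly_Mapping.lookup a i \<le> Nf i" by (auto simp: not_le intro: less_imp_le)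
        then have "degW (-F) a \<le> (\<Sum>i\<in>-F. Nf i)" unfolding degW_def by (intro sum_mono) auto
        then show False using aM unfolding M_def by simp
      qed
      then obtain i where i: "i \<notin> F" "Nf i \<le> Poly_Mapping.lookup a i" by auto
      from upcD[OF T(1) Nf[OF i(1)], of "a - nsm (Nf i) (ev i)"] show "a \<in> T"
        by (simp only: nsm_ev_le[OF i(2), symmetric])
    qed
  qed
  have TZ: "T \<subseteq> Z F"
  proof
    fix a assume a: "a \<in> T"
    show "a \<in> Z F"
    proof (rule ccontr)
      assume "a \<notin> Z F"
      then have "a \<in> Fsupp F" by (simp add: not_Z_Fsupp)
      then have "0 + a \<in> T \<longrightarrow> 0 \<in> T" using T(2) unfolding finv_def by blast
      then show False using T(3) a by simp
    qed
  qed
  have ideal: "is_ideal (MI T :: ('v, 'k) mpoly set)" by (rule MI_ideal[OF T(1)])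
  show "primary_ideal (MI T :: ('v, 'k) mpoly set)"
    unfolding primary_ideal_def
  proof (intro conjI allI impI)
    show "is_ideal (MI T :: ('v, 'k) mpoly set)" by (rule ideal)
    show "MI T \<noteq> (UNIV :: ('v, 'k) mpoly set)" using one_notin_MI[OF T(3)] by blast
    fix a b :: "('v, 'k) mpoly" assume ab: "a * b \<in> MI T"
    show "a \<in> MI T \<or> (\<exists>m. b ^ m \<in> MI T)"
    proof (cases "b \<in> MI (Z F)")
      case True then show ?thesis using powin by blast
    next
      case False
      then have "a \<in> MI T" using invariance[OF T(1,2) False, of a] ab by (simp add: mult.commute)
      then show ?thesis by blast
    qed
  qed
  show "ideal_radical (MI T :: ('v, 'k) mpoly set) = P_ideal F"
  proof
    show "ideal_radical (MI T :: ('v, 'k) mpoly set) \<subseteq> P_ideal F"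
      by (rule radical_sub_prime[OF P_prime]) (simp add: P_ideal_MI MI_mono[OF TZ])
    show "P_ideal F \<subseteq> ideal_radical (MI T :: ('v, 'k) mpoly set)"
      unfolding P_ideal_MI ideal_radical_def using powin by blast
  qed
qed

section \<open>Dickson's lemma\<close>

lemma dickson_W:
  fixes W :: "'v set"
  assumes "finite W"
  shows "\<forall>S :: 'v expo set. \<exists>B\<subseteq>S. finite B \<and>
           (\<forall>a\<in>S. \<exists>b\<in>B. \<forall>i\<in>W. Poly_Mapping.lookup b i \<le> Poly_Mapping.lookup a i)"
  using assms
proof (induction W rule: finite_induct)
  case empty
  show ?case
  proof
    fix S :: "'v expo set"
    show "\<exists>B\<subseteq>S. finite B \<and> (\<forall>a\<in>S. \<exists>b\<in>B. \<forall>i\<in>{}. Poly_Mapping.lookup b i \<le> Poly_Mapping.lookup a i)"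
    proof (cases "S = {}")
      case True then show ?thesis by auto
    next
      case False
      then obtain x where "x \<in> S" by auto
      then show ?thesis by (intro exI[of _ "{x}"]) auto
    qed
  qed
next
  case (insert w W)
  show ?case
  proof
    fix S :: "'v expo set"
    have IH: "\<exists>B\<subseteq>S'. finite B \<and> (\<forall>a\<in>S'. \<exists>b\<in>B. \<forall>i\<in>W. Poly_Mapping.lookup b i \<le> Poly_Mapping.lookup a i)"
      for S' :: "'v expo set"
      using insert.IH by (rule spec)
    obtain B0 where B0: "B0 \<subseteq> S" "finite B0"
        "\<forall>a\<in>S. \<exists>b\<in>B0. \<forall>i\<in>W. Poly_Mapping.lookup b i \<le> Poly_Mapping.lookup a i"
      using IH[of S] by (elim exE conjE) (rule that)
    define M where "M = Max (insert 0 ((\<lambda>b. Poly_Mapping.lookup b w) ` B0))"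
    have M: "Poly_Mapping.lookup b w \<le> M" if "b \<in> B0" for b
      unfolding M_def using B0(2) that by (intro Max_ge) auto
    have "\<forall>k. \<exists>Bk. Bk \<subseteq> {a\<in>S. Poly_Mapping.lookup a w = k} \<and> finite Bk \<and>
        (\<forall>a\<in>{a\<in>S. Poly_Mapping.lookup a w = k}. \<exists>b\<in>Bk. \<forall>i\<in>W. Poly_Mapping.lookup b i \<le> Poly_Mapping.lookup a i)"
      using IH by (intro allI) (rule IH)
    then have "\<exists>Bk. \<forall>k. Bk k \<subseteq> {a\<in>S. Poly_Mapping.lookup a w = k} \<and> finite (Bk k) \<and>
        (\<forall>a\<in>{a\<in>S. Poly_Mapping.lookup a w = k}. \<exists>b\<in>Bk k. \<forall>i\<in>W. Poly_Mapping.lookup b i \<le> Poly_Mapping.lookup a i)"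
      by (rule choice)
    then obtain Bk where Bk0: "\<forall>k. Bk k \<subseteq> {a\<in>S. Poly_Mapping.lookup a w = k} \<and> finite (Bk k) \<and>
        (\<forall>a\<in>{a\<in>S. Poly_Mapping.lookup a w = k}. \<exists>b\<in>Bk k. \<forall>i\<in>W. Poly_Mapping.lookup b i \<le> Poly_Mapping.lookup a i)"
      by blast
    have Bk: "\<And>k. Bk k \<subseteq> {a\<in>S. Poly_Mapping.lookup a w = k}" "\<And>k. finite (Bk k)"
        "\<And>k. \<forall>a\<in>{a\<in>S. Poly_Mapping.lookup a w = k}. \<exists>b\<in>Bk k. \<forall>i\<in>W. Poly_Mapping.lookup b i \<le> Poly_Mapping.lookup a i"
      using Bk0 by blast+
    define B where "B = B0 \<union> (\<Union>k<M. Bk k)"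
    have "B \<subseteq> S" unfolding B_def using B0(1) Bk(1) by blast
    moreover have "finite B" unfolding B_def using B0(2) Bk(2) by auto
    moreover have "\<exists>b\<in>B. \<forall>i\<in>insert w W. Poly_Mapping.lookup b i \<le> Poly_Mapping.lookup a i" if a: "a \<in> S" for a
    proof (cases "M \<le> Poly_Mapping.lookup a w")
      case True
      obtain b where b: "b \<in> B0" "\<forall>i\<in>W. Poly_Mapping.lookup b i \<le> Poly_Mapping.lookup a i"
        using B0(3) a by blast
      have "Poly_Mapping.lookup b w \<le> Poly_Mapping.lookup a w" using M[OF b(1)] True by simp
      then have "\<forall>i\<in>insert w W. Poly_Mapping.lookup b i \<le> Poly_Mapping.lookup a i" using b(2) by simp
      moreover have "b \<in> B" using b(1) unfolding B_def by blast
      ultimately show ?thesis by blast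
    next
      case False
      define k where "k = Poly_Mapping.lookup a w"
      have "a \<in> {a\<in>S. Poly_Mapping.lookup a w = k}" using a k_def by simp
      then obtain b where b: "b \<in> Bk k" "\<forall>i\<in>W. Poly_Mapping.lookup b i \<le> Poly_Mapping.lookup a i"
        using Bk(3)[of k] by blast
      have "Poly_Mapping.lookup b w = k" using Bk(1)[of k] b(1) by auto
      moreover have "k < M" using False k_def by simp
      ultimately have "b \<in> B" using b(1) unfolding B_def by blast
      moreover have "\<forall>i\<in>insert w W. Poly_Mapping.lookup b i \<le> Poly_Mapping.lookup a i"
        using b(2) \<open>Poly_Mapping.lookup b w = k\<close> k_def by simp
      ultimately show ?thesis by blast
    qed
    then have "\<forall>a\<in>S. \<exists>b\<in>B. \<forall>i\<in>insert w W. Poly_Mapping.lookup b i \<le> Poly_Mapping.lookup a i" by blast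
    ultimately show "\<exists>B\<subseteq>S. finite B \<and> (\<forall>a\<in>S. \<exists>b\<in>B. \<forall>i\<in>insert w W. Poly_Mapping.lookup b i \<le> Poly_Mapping.lookup a i)"
      by (intro exI[of _ B] conjI)
  qed
qed

lemma dickson:
  fixes S :: "'v::finite expo set"
  obtains B where "B \<subseteq> S" "finite B" "\<And>a. a \<in> S \<Longrightarrow> \<exists>b\<in>B. \<forall>i. Poly_Mapping.lookup b i \<le> Poly_Mapping.lookup a i"
proof -
  have "\<exists>B. B \<subseteq> S \<and> finite B \<and> (\<forall>a\<in>S. \<exists>b\<in>B. \<forall>i\<in>UNIV. Poly_Mapping.lookup b i \<le> Poly_Mapping.lookup a i)"
    using dickson_W[OF finite_UNIV] by (rule spec)
  then obtain B where B: "B \<subseteq> S \<and> finite B \<and> (\<forall>a\<in>S. \<exists>b\<in>B. \<forall>i\<in>UNIV. Poly_Mapping.lookup b i \<le> Poly_Mapping.lookup a i)"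
    by (elim exE)
  show ?thesis
  proof (rule that)
    show "B \<subseteq> S" using B by (elim conjE)
    show "finite B" using B by (elim conjE)
    fix a assume "a \<in> S"
    then show "\<exists>b\<in>B. \<forall>i. Poly_Mapping.lookup b i \<le> Poly_Mapping.lookup a i" using B by simp
  qed
qed

section \<open>Existence of minimal primary decompositions\<close>

definition Tc :: "nat \<Rightarrow> ('v \<Rightarrow> nat) \<Rightarrow> 'v expo set" where
  "Tc N c = {a. \<exists>i. c i < N \<and> c i < Poly_Mapping.lookup a i}"

lemma ev_in_Z: "ev i \<in> Z F \<longleftrightarrow> i \<notin> F"
  unfolding Z_def by (auto simp: lookup_ev split: if_splits)

lemma upc_Tc: "upc (Tc N c)"
  unfolding upc_def Tc_def by (auto simp: lookup_add)

lemma mpd_exists: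
  fixes S :: "'v::finite expo set"
  assumes S: "upc S"
  shows "\<exists>Qs. minimal_primary_decomposition (MI S :: ('v, 'k::field) mpoly set) Qs"
proof -
  have "\<exists>B. B \<subseteq> S \<and> finite B \<and> (\<forall>a\<in>S. \<exists>b\<in>B. \<forall>i\<in>UNIV. Poly_Mapping.lookup b i \<le> Poly_Mapping.lookup a i)"
    using dickson_W[OF finite_UNIV] by (rule spec)
  then obtain B where B0: "B \<subseteq> S \<and> finite B \<and> (\<forall>a\<in>S. \<exists>b\<in>B. \<forall>i\<in>UNIV. Poly_Mapping.lookup b i \<le> Poly_Mapping.lookup a i)"
    by (elim exE)
  have B: "B \<subseteq> S" "finite B" "\<And>a. a \<in> S \<Longrightarrow> \<exists>b\<in>B. \<forall>i. Poly_Mapping.lookup b i \<le> Poly_Mapping.lookup a i"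
    using B0 by simp_all
  define N where "N = Suc (Max (insert 0 {Poly_Mapping.lookup b i | b i. b \<in> B}))"
  have finvals: "finite {Poly_Mapping.lookup b i | b i. b \<in> B}"
  proof -
    have "{Poly_Mapping.lookup b i | b i. b \<in> B} = (\<lambda>(b, i). Poly_Mapping.lookup b i) ` (B \<times> UNIV)" by auto
    then show ?thesis using B(2) by simp
  qed
  have bN: "Poly_Mapping.lookup b i < N" if "b \<in> B" for b i
  proof -
    have "Poly_Mapping.lookup b i \<le> Max (insert 0 {Poly_Mapping.lookup b i | b i. b \<in> B})"
      using finvals that by (intro Max_ge) auto
    then show ?thesis unfolding N_def by simp
  qed
  define C where "C = {c. (\<forall>i. c i \<le> N) \<and> S \<subseteq> Tc N c}"
  have finC: "finite C"
  proof (rule finite_subset)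
    show "C \<subseteq> {f. \<forall>x. (x \<in> UNIV \<longrightarrow> f x \<in> {..N}) \<and> (x \<notin> UNIV \<longrightarrow> f x = 0)}" unfolding C_def by auto
    show "finite {f :: 'v \<Rightarrow> nat. \<forall>x. (x \<in> UNIV \<longrightarrow> f x \<in> {..N}) \<and> (x \<notin> UNIV \<longrightarrow> f x = 0)}"
      by (rule finite_set_of_finite_funs) auto
  qed
  have Seq: "S = (\<Inter>c\<in>C. Tc N c)"
  proof
    show "S \<subseteq> (\<Inter>c\<in>C. Tc N c)" unfolding C_def by auto
    show "(\<Inter>c\<in>C. Tc N c) \<subseteq> S"
    proof
      fix u assume u: "u \<in> (\<Inter>c\<in>C. Tc N c)"
      show "u \<in> S"
      proof (rule ccontr)
        assume uS: "u \<notin> S"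
        define c where "c i = min (Poly_Mapping.lookup u i) N" for i
        have "S \<subseteq> Tc N c"
        proof
          fix a assume a: "a \<in> S"
          then obtain b where b: "b \<in> B" "\<forall>i. Poly_Mapping.lookup b i \<le> Poly_Mapping.lookup a i" using B(3) by blast
          have "\<exists>i. Poly_Mapping.lookup u i < Poly_Mapping.lookup b i"
          proof (rule ccontr)
            assume "\<not> ?thesis"
            then have "u = b + (u - b)" by (intro le_expo) (simp add: not_less)
            then show False using uS upcD[OF S] B(1) b(1) by (metis subsetD)
          qed
          then obtain i where i: "Poly_Mapping.lookup u i < Poly_Mapping.lookup b i" by auto
          have "Poly_Mapping.lookup u i < N" using i bN[OF b(1), of i] by simp
          then have "c i = Poly_Mapping.lookup u i" "c i < N" unfolding c_def by auto
          then show "a \<in> Tc N c" unfolding Tc_def using i b(2)[rule_format, of i]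
            by (intro CollectI exI[of _ i]) simp
        qed
        then have "c \<in> C" unfolding C_def c_def by auto
        moreover have "u \<notin> Tc N c" unfolding Tc_def c_def by auto
        ultimately show False using u by blast
      qed
    qed
  qed
  define CW where "CW W = {c\<in>C. {i. c i < N} = W}" for W
  define TW where "TW W = (\<Inter>c\<in>CW W. Tc N c)" for W
  define Qs0 where "Qs0 = (\<lambda>W. MI (TW W) :: ('v, 'k) mpoly set) ` {W. CW W \<noteq> {}}"
  have prim: "primary_ideal (MI (TW W) :: ('v, 'k) mpoly set) \<and> ideal_radical (MI (TW W) :: ('v, 'k) mpoly set) = P_ideal (-W)"
    if ne: "CW W \<noteq> {}" for W
  proof -
    have u: "upc (TW W)" unfolding TW_def by (rule upc_Inter) (auto intro: upc_Tc)
    have f: "finv (-W) (TW W)"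
      unfolding finv_def TW_def
    proof (intro allI impI)
      fix a e assume e: "e \<in> Fsupp (-W)" and ae: "a + e \<in> (\<Inter>c\<in>CW W. Tc N c)"
      show "a \<in> (\<Inter>c\<in>CW W. Tc N c)"
      proof
        fix c assume c: "c \<in> CW W"
        then obtain i where i: "c i < N" "c i < Poly_Mapping.lookup (a + e) i" using ae unfolding Tc_def by blast
        have "i \<in> W" using c i(1) unfolding CW_def by auto
        then have "Poly_Mapping.lookup e i = 0" using e unfolding Fsupp_def by auto
        then show "a \<in> Tc N c" using i unfolding Tc_def by (auto simp: lookup_add)
      qed
    qed
    have z: "0 \<notin> TW W" using ne unfolding TW_def Tc_def by auto
    have p: "\<exists>M. nsm M (ev i) \<in> TW W" if "i \<notin> -W" for i
    proof (rule exI[of _ N])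
      show "nsm N (ev i) \<in> TW W" unfolding TW_def Tc_def CW_def using that
        by (auto simp: lookup_ev intro!: exI[of _ i])
    qed
    show ?thesis using MI_primary[OF u f z p, where 'k='k] by simp
  qed
  have "finite Qs0" unfolding Qs0_def by simp
  moreover have "\<forall>Q\<in>Qs0. primary_ideal Q" unfolding Qs0_def using prim by blast
  moreover have "\<Inter>Qs0 = MI S"
  proof -
    have "(\<Inter>W\<in>{W. CW W \<noteq> {}}. TW W) = (\<Inter>c\<in>C. Tc N c)"
      unfolding TW_def CW_def by blast
    then have "(\<Inter>W\<in>{W. CW W \<noteq> {}}. TW W) = S" using Seq by simp
    then show ?thesis unfolding Qs0_def by (metis MI_Inter image_image)
  qed
  moreover have "\<forall>Q\<in>Qs0. \<forall>Q'\<in>Qs0. ideal_radical Q = ideal_radical Q' \<longrightarrow> Q = Q'"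
  proof (intro ballI impI)
    fix Q Q' assume Q: "Q \<in> Qs0" and Q': "Q' \<in> Qs0" and r: "ideal_radical Q = ideal_radical Q'"
    obtain W where W: "CW W \<noteq> {}" "Q = MI (TW W)" using Q unfolding Qs0_def by auto
    obtain W' where W': "CW W' \<noteq> {}" "Q' = MI (TW W')" using Q' unfolding Qs0_def by auto
    have "P_ideal (-W) = (P_ideal (-W') :: ('v, 'k) mpoly set)" using r prim W W' by metis
    then have "Z (-W) = Z (-W')" unfolding P_ideal_MI by (rule MI_inj)
    then have "ev i \<in> Z (-W) \<longleftrightarrow> ev i \<in> Z (-W')" for i by simp
    then have "W = W'" unfolding ev_in_Z by auto
    then show "Q = Q'" using W W' by simp
  qed
  ultimately show ?thesis by (rule exists_mpd)
qed

lemma monom_nsm_ev: "monom (nsm k (ev i)) = (var i ^ k :: ('v::finite, 'k::field) mpoly)"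
  by (induction k) (simp_all add: monom_0 nsm_Suc var_monom monom_mult[symmetric])

lemma monom_sum: "monom (sum g X) = (\<Prod>x\<in>X. monom (g x) :: ('v, 'k::field) mpoly)"
  by (induction X rule: infinite_finite_induct) (simp_all add: monom_0 monom_mult[symmetric])

lemma expo_sum_ev: "a = (\<Sum>i\<in>UNIV. nsm (Poly_Mapping.lookup a i) (ev (i :: 'v::finite)))"
proof (rule expo_eqI)
  fix j
  have "(\<Sum>i\<in>UNIV. Poly_Mapping.lookup a i * Poly_Mapping.lookup (ev i) j) = (\<Sum>i\<in>UNIV. if i = j then Poly_Mapping.lookup a i else 0)"
    by (intro sum.cong) (auto simp: lookup_ev)
  then show "Poly_Mapping.lookup a j = Poly_Mapping.lookup (\<Sum>i\<in>UNIV. nsm (Poly_Mapping.lookup a i) (ev i)) j"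
    by (simp add: lookup_sum)
qed

lemma monom_prod_var: "monom a = (\<Prod>i\<in>UNIV. var i ^ Poly_Mapping.lookup a i :: ('v::finite, 'k::field) mpoly)"
  by (subst expo_sum_ev) (simp add: monom_sum monom_nsm_ev)

lemma prime_prod_in:
  assumes "prime_ideal P" "finite X" "prod f X \<in> P" shows "\<exists>x\<in>X. f x \<in> P"
  using prime_prod_notin[OF assms(1,2)] assms(3) by blast

lemma minimal_prime_monomial:
  fixes S :: "'v::finite expo set"
  assumes S: "upc S" and mp: "minimal_prime P (MI S :: ('v, 'k::field) mpoly set)"
  shows "\<exists>G. P = P_ideal G"
proof -
  have P: "prime_ideal P" "MI S \<subseteq> P" using mp unfolding minimal_prime_def by auto
  have Pi: "is_ideal P" using P unfolding prime_ideal_def by auto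
  define G where "G = {i. var i \<notin> P}"
  have sub1: "P_ideal G \<subseteq> P"
    unfolding P_ideal_def by (rule ideal_gen_least[OF Pi]) (auto simp: G_def)
  have sub2: "MI S \<subseteq> (P_ideal G :: ('v, 'k) mpoly set)"
    unfolding P_ideal_MI
  proof (rule MI_mono, rule subsetI)
    fix a assume a: "a \<in> S"
    then have "(monom a :: ('v, 'k) mpoly) \<in> P" using P(2) monom_in_MI by blast
    then have "(\<Prod>i\<in>UNIV. var i ^ Poly_Mapping.lookup a i :: ('v, 'k) mpoly) \<in> P" by (simp add: monom_prod_var)
    from prime_prod_in[OF P(1) finite_UNIV this] obtain i where i: "var i ^ Poly_Mapping.lookup a i \<in> P"
      by (elim bexE)
    have "Poly_Mapping.lookup a i \<noteq> 0" using i prime_one_notin[OF P(1)] by (metis power_0)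
    moreover have "var i \<in> P" using prime_power_mem[OF P(1) i] .
    ultimately show "a \<in> Z G" unfolding Z_def G_def by auto
  qed
  have "P_ideal G = P" using mp P_prime sub1 sub2 unfolding minimal_prime_def by blast
  then show ?thesis by blast
qed

lemma minimal_prime_pow:
  assumes I: "is_ideal I" and t: "t \<ge> 1"
  shows "minimal_prime P (ideal_pow I t) \<longleftrightarrow> minimal_prime P I"
proof -
  have eq: "ideal_pow I t \<subseteq> Q \<longleftrightarrow> I \<subseteq> Q" if Q: "prime_ideal Q" for Q
  proof
    assume "ideal_pow I t \<subseteq> Q"
    then show "I \<subseteq> Q" using ideal_pow_mem_power prime_power_mem[OF Q] by blast
  next
    assume "I \<subseteq> Q" then show "ideal_pow I t \<subseteq> Q" using ideal_pow_sub[OF I t] by blast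
  qed
  show ?thesis unfolding minimal_prime_def using eq by blast
qed


section \<open>Integral closedness of degree ideals\<close>

lemma pw_mono: "S \<subseteq> S' \<Longrightarrow> pw S t \<subseteq> pw S' t"
  by (induction t) (auto simp: sump_def)

lemma pw_degW:
  assumes "S \<subseteq> {a. m \<le> degW W a}"
  shows "pw S t \<subseteq> {a. t * m \<le> degW W a}"
proof (induction t)
  case 0 then show ?case by simp
next
  case (Suc t)
  show ?case
  proof
    fix x assume "x \<in> pw S (Suc t)"
    then obtain u v where "x = u + v" "u \<in> S" "v \<in> pw S t" by (auto simp: sump_def)
    moreover have "m \<le> degW W u" "t * m \<le> degW W v" using assms Suc calculation by auto
    ultimately show "x \<in> {a. Suc t * m \<le> degW W a}" by (simp add: degW_add)
  qed
qed

lemma upc_degset: "upc {a. m \<le> degW W a}"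
  unfolding upc_def by (auto simp: degW_add)

lemma min_degW:
  fixes f :: "('v::finite, 'k::field) mpoly"
  assumes a0: "is_min (psi W) f a0" and b: "b \<in> Poly_Mapping.keys f"
  shows "degW W a0 \<le> degW W b"
proof (rule ccontr)
  assume "\<not> ?thesis"
  then have "psi W b < psi W a0" by (intro psi_less_deg) simp
  then show False using a0 b unfolding is_min_def by (simp add: leD)
qed

lemma degset_closed:
  "integrally_closed (MI {a. m \<le> degW W a} :: ('v::finite, 'k::field) mpoly set)"
proof -
  let ?T = "{a. m \<le> degW W a}"
  have "integral_closure (MI ?T :: ('v, 'k) mpoly set) \<subseteq> MI ?T"
  proof
    fix f :: "('v, 'k) mpoly" assume "f \<in> integral_closure (MI ?T)"
    then obtain M c where M: "M \<ge> 1" and c: "\<forall>i\<in>{1..M}. c i \<in> ideal_pow (MI ?T) i"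
      and eq: "f ^ M + (\<Sum>i=1..M. c i * f ^ (M - i)) = 0"
      unfolding integral_closure_def integral_over_ideal_def by blast
    show "f \<in> MI ?T"
    proof (rule ccontr)
      assume nf: "f \<notin> MI ?T"
      then have "f \<noteq> 0" using MI_ideal[OF upc_degset] ideal_0 by metis
      then obtain a0 where a0: "is_min (psi W) f a0" using exists_min by blast
      obtain b where b: "b \<in> Poly_Mapping.keys f" "b \<notin> ?T" using nf unfolding MI_def by auto
      define e where "e = degW W a0"
      have em: "e < m" using min_degW[OF a0 b(1)] b(2) unfolding e_def by simp
      have kf: "Poly_Mapping.keys f \<subseteq> {a. e \<le> degW W a}" using min_degW[OF a0] unfolding e_def by auto
      obtain M' where M': "M = Suc M'" using M by (cases M) auto
      have mp: "is_min (psi W) (f ^ M) (nsm M a0)" unfolding M' by (rule min_power[OF inj_psi psi_add a0])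
      then have nz: "Poly_Mapping.lookup (f ^ M) (nsm M a0) \<noteq> 0" unfolding is_min_def by (simp add: in_keys_iff)
      have z: "Poly_Mapping.lookup (c i * f ^ (M - i)) (nsm M a0) = 0" if i: "i \<in> {1..M}" for i
      proof -
        have "c i \<in> MI (pw ?T i)" using c i ideal_pow_MI[OF upc_degset] by metis
        then have "Poly_Mapping.keys (c i) \<subseteq> {a. i * m \<le> degW W a}"
          using pw_degW[of ?T m W i] unfolding MI_def by auto
        moreover have "Poly_Mapping.keys (f ^ (M - i)) \<subseteq> {a. (M - i) * e \<le> degW W a}"
          by (rule keys_power_degW[OF kf])
        ultimately have k: "Poly_Mapping.keys (c i * f ^ (M - i)) \<subseteq> {a. i * m + (M - i) * e \<le> degW W a}"
          by (rule keys_mult_degW)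
        have "M * e = (M - i) * e + i * e" using i by (simp add: add_mult_distrib[symmetric])
        moreover have "i * e < i * m" using i em by simp
        ultimately have "degW W (nsm M a0) < i * m + (M - i) * e" by (simp add: degW_nsm e_def)
        then have "nsm M a0 \<notin> Poly_Mapping.keys (c i * f ^ (M - i))" using k by auto
        then show ?thesis by (simp add: in_keys_iff)
      qed
      have "Poly_Mapping.lookup (f ^ M + (\<Sum>i=1..M. c i * f ^ (M - i))) (nsm M a0)
          = Poly_Mapping.lookup (f ^ M) (nsm M a0)"
        by (simp add: lookup_add lookup_sum z)
      then show False using eq nz by simp
    qed
  qed
  moreover have "(MI ?T :: ('v, 'k) mpoly set) \<subseteq> integral_closure (MI ?T)"
    by (rule ideal_sub_integral_closure[OF MI_ideal[OF upc_degset]])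
  ultimately show ?thesis unfolding integrally_closed_def by blast
qed

definition G0 :: "'v set \<Rightarrow> nat \<Rightarrow> 'v::finite expo set" where
  "G0 W D = {nsm (D - 1) (ev i) + ev j | i j. i \<in> W \<and> j \<in> W}"

lemma nsm_ev_Suc: "nsm (D - 1) (ev i) + ev i = nsm D (ev i)" if "D \<ge> 1" for D :: nat
proof -
  have "nsm (Suc (D - 1)) (ev i) = ev i + nsm (D - 1) (ev i)" by (rule nsm_Suc)
  then show ?thesis using that by (simp add: add.commute)
qed

lemma lookup_minus_expo: "Poly_Mapping.lookup (a - b :: 'v expo) i = Poly_Mapping.lookup a i - Poly_Mapping.lookup b i"
  by (simp add: lookup_minus)

lemma degW_minus:
  fixes a b :: "'v::finite expo"
  assumes "\<And>i. Poly_Mapping.lookup b i \<le> Poly_Mapping.lookup a i"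
  shows "degW W (a - b) = degW W a - degW W b"
proof -
  have "a = b + (a - b)" by (rule le_expo[OF assms])
  then have "degW W a = degW W b + degW W (a - b)" by (metis degW_add)
  then show ?thesis by simp
qed

lemma comb_core:
  fixes W :: "'v::finite set" and X :: "'v expo set"
  assumes X: "upc X" "G0 W D \<subseteq> X" and D: "D \<ge> 1" and i0: "i0 \<in> W"
  shows "b \<in> Fsupp W \<Longrightarrow> degW W b = D * t \<Longrightarrow>
    (D - 1) * (\<Sum>j\<in>W - {i0}. Poly_Mapping.lookup b j mod D) \<le> Poly_Mapping.lookup b i0 \<Longrightarrow> b \<in> pw X t"
proof (induction t arbitrary: b)
  case 0 then show ?case by simp
next
  case (Suc t)
  have bF: "b \<in> Fsupp W" and bd: "degW W b = D * Suc t"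
    and inv: "(D - 1) * (\<Sum>j\<in>W - {i0}. Poly_Mapping.lookup b j mod D) \<le> Poly_Mapping.lookup b i0"
    using Suc.prems by auto
  have step: "b \<in> pw X (Suc t)" if g: "g \<in> X" and gb: "\<And>i. Poly_Mapping.lookup g i \<le> Poly_Mapping.lookup b i"
    and rest: "b - g \<in> pw X t" for g
  proof -
    have "b = g + (b - g)" by (rule le_expo[OF gb])
    then show ?thesis using g rest by (auto simp: sump_def)
  qed
  have FsuppD: "b - g \<in> Fsupp W" for g using bF unfolding Fsupp_def by (simp add: lookup_minus)
  have degg: "degW W (b - g) = D * t" if "\<And>i. Poly_Mapping.lookup g i \<le> Poly_Mapping.lookup b i" "degW W g = D" for g
    using degW_minus[OF that(1)] that(2) bd by simp
  show ?case
  proof (cases "\<exists>j\<in>W - {i0}. D \<le> Poly_Mapping.lookup b j")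
    case True
    then obtain j where j: "j \<in> W" "j \<noteq> i0" "D \<le> Poly_Mapping.lookup b j" by auto
    define g where "g = nsm D (ev j)"
    have lg: "Poly_Mapping.lookup g i = (if i = j then D else 0)" for i unfolding g_def by (simp add: lookup_ev)
    have gX: "g \<in> X" using X(2) j(1) D unfolding G0_def g_def by (force simp: nsm_ev_Suc[OF D, symmetric])
    have gb: "\<And>i. Poly_Mapping.lookup g i \<le> Poly_Mapping.lookup b i" using j(3) by (simp add: lg)
    have dg: "degW W g = D" unfolding degW_def lg using j(1) by (simp add: sum.delta')
    have "(\<Sum>k\<in>W - {i0}. Poly_Mapping.lookup (b - g) k mod D) = (\<Sum>k\<in>W - {i0}. Poly_Mapping.lookup b k mod D)"
    proof (rule sum.cong)
      fix k assume "k \<in> W - {i0}"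
      show "Poly_Mapping.lookup (b - g) k mod D = Poly_Mapping.lookup b k mod D"
      proof (cases "k = j")
        case True
        then show ?thesis using j(3) le_mod_geq[of D "Poly_Mapping.lookup b j"] by (simp add: lookup_minus lg)
      next
        case False
        then show ?thesis by (simp add: lookup_minus lg)
      qed
    qed simp
    moreover have "Poly_Mapping.lookup (b - g) i0 = Poly_Mapping.lookup b i0" using j(2) by (simp add: lookup_minus lg)
    ultimately have "b - g \<in> pw X t" using Suc.IH[OF FsuppD degg[OF gb dg]] inv by simp
    then show ?thesis by (rule step[OF gX gb])
  next
    case notA: False
    show ?thesis
    proof (cases "\<exists>j\<in>W - {i0}. 1 \<le> Poly_Mapping.lookup b j")
      case True
      then obtain j where j: "j \<in> W" "j \<noteq> i0" "1 \<le> Poly_Mapping.lookup b j" by auto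
      have jD: "Poly_Mapping.lookup b j < D" using notA j by (auto simp: not_le)
      have fin: "finite (W - {i0})" by simp
      have "Poly_Mapping.lookup b j mod D \<le> (\<Sum>k\<in>W - {i0}. Poly_Mapping.lookup b k mod D)"
        by (rule member_le_sum) (use j fin in auto)
      then have "1 \<le> (\<Sum>k\<in>W - {i0}. Poly_Mapping.lookup b k mod D)" using j(3) jD by simp
      then have i0big: "D - 1 \<le> Poly_Mapping.lookup b i0" using inv
        by (metis dual_order.trans mult.right_neutral mult_le_mono2)
      define g where "g = nsm (D - 1) (ev i0) + ev j"
      have lg: "Poly_Mapping.lookup g i = (if i = i0 then D - 1 else 0) + (if i = j then 1 else 0)" for i
        unfolding g_def by (simp add: lookup_ev lookup_add)
      have gX: "g \<in> X" using X(2) j(1) i0 unfolding G0_def g_def by blast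
      have gb: "\<And>i. Poly_Mapping.lookup g i \<le> Poly_Mapping.lookup b i" using j i0big by (auto simp: lg)
      have dg: "degW W g = D" unfolding degW_def lg using j(1,2) i0 D by (simp add: sum.distrib sum.delta')
      have s1: "(\<Sum>k\<in>W - {i0}. Poly_Mapping.lookup b k mod D)
          = Suc (\<Sum>k\<in>W - {i0}. Poly_Mapping.lookup (b - g) k mod D)"
      proof -
        have "(\<Sum>k\<in>W - {i0}. Poly_Mapping.lookup b k mod D)
            = Poly_Mapping.lookup b j mod D + (\<Sum>k\<in>W - {i0} - {j}. Poly_Mapping.lookup b k mod D)"
          using j fin by (simp add: sum.remove)
        moreover have "(\<Sum>k\<in>W - {i0}. Poly_Mapping.lookup (b - g) k mod D)
            = Poly_Mapping.lookup (b - g) j mod D + (\<Sum>k\<in>W - {i0} - {j}. Poly_Mapping.lookup (b - g) k mod D)"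
          using j fin by (simp add: sum.remove)
        moreover have "(\<Sum>k\<in>W - {i0} - {j}. Poly_Mapping.lookup (b - g) k mod D)
            = (\<Sum>k\<in>W - {i0} - {j}. Poly_Mapping.lookup b k mod D)"
          by (rule sum.cong) (auto simp: lookup_minus lg)
        moreover have "Poly_Mapping.lookup (b - g) j = Poly_Mapping.lookup b j - 1" using j(2) by (simp add: lookup_minus lg)
        ultimately show ?thesis using jD j(3) by simp
      qed
      have "Poly_Mapping.lookup (b - g) i0 = Poly_Mapping.lookup b i0 - (D - 1)" using j(2) by (simp add: lookup_minus lg)
      then have "(D - 1) * (\<Sum>k\<in>W - {i0}. Poly_Mapping.lookup (b - g) k mod D) \<le> Poly_Mapping.lookup (b - g) i0"
        using inv s1 by (simp add: algebra_simps)
      then have "b - g \<in> pw X t" using Suc.IH[OF FsuppD degg[OF gb dg]] by simp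
      then show ?thesis by (rule step[OF gX gb])
    next
      case False
      have zero: "Poly_Mapping.lookup b k = 0" if k: "k \<in> W - {i0}" for k
      proof -
        have "\<not> 1 \<le> Poly_Mapping.lookup b k" using False k by blast
        then show ?thesis by simp
      qed
      have "degW W b = Poly_Mapping.lookup b i0"
        unfolding degW_def using i0 zero by (simp add: sum.remove)
      then have bi0: "D \<le> Poly_Mapping.lookup b i0" using bd by simp
      define g where "g = nsm D (ev i0)"
      have lg: "Poly_Mapping.lookup g i = (if i = i0 then D else 0)" for i unfolding g_def by (simp add: lookup_ev)
      have gX: "g \<in> X" using X(2) i0 D unfolding G0_def g_def by (force simp: nsm_ev_Suc[OF D, symmetric])
      have gb: "\<And>i. Poly_Mapping.lookup g i \<le> Poly_Mapping.lookup b i" using bi0 by (simp add: lg)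
      have dg: "degW W g = D" unfolding degW_def lg using i0 by (simp add: sum.delta')
      have "(\<Sum>k\<in>W - {i0}. Poly_Mapping.lookup (b - g) k mod D) = 0"
        using zero by (simp add: lookup_minus lg)
      then have "b - g \<in> pw X t" using Suc.IH[OF FsuppD degg[OF gb dg]] by simp
      then show ?thesis by (rule step[OF gX gb])
    qed
  qed
qed

lemma degW_ev: "degW W (ev i :: 'v::finite expo) = (if i \<in> W then 1 else 0)"
proof -
  have "degW W (ev i) = (\<Sum>j\<in>W. if i = j then 1 else 0)" unfolding degW_def by (simp add: lookup_ev)
  also have "\<dots> = (if i \<in> W then 1 else 0)" using sum.delta[of W i "\<lambda>_. 1::nat"] by simp
  finally show ?thesis .
qed

lemma shrink:
  fixes a :: "'v::finite expo"
  shows "k \<le> degW W a \<Longrightarrow> \<exists>b. (\<forall>i. Poly_Mapping.lookup b i \<le> Poly_Mapping.lookup a i) \<and> b \<in> Fsupp W \<and> degW W b = k"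
proof (induction k)
  case 0 then show ?case by (intro exI[of _ 0]) (simp add: Fsupp_0)
next
  case (Suc k)
  then obtain b where b: "\<forall>i. Poly_Mapping.lookup b i \<le> Poly_Mapping.lookup a i" "b \<in> Fsupp W" "degW W b = k" by auto
  have "\<exists>i\<in>W. Poly_Mapping.lookup b i < Poly_Mapping.lookup a i"
  proof (rule ccontr)
    assume "\<not> ?thesis"
    then have "\<forall>i\<in>W. Poly_Mapping.lookup a i \<le> Poly_Mapping.lookup b i" by (auto simp: not_less)
    then have "degW W a \<le> degW W b" unfolding degW_def by (intro sum_mono) auto
    then show False using Suc.prems b(3) by simp
  qed
  then obtain i where i: "i \<in> W" "Poly_Mapping.lookup b i < Poly_Mapping.lookup a i" by auto
  have "\<forall>j. Poly_Mapping.lookup (b + ev i) j \<le> Poly_Mapping.lookup a j" using b(1) i(2)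
    by (auto simp: lookup_add lookup_ev Suc_le_eq)
  moreover have "b + ev i \<in> Fsupp W" using b(2) i(1) unfolding Fsupp_def by (auto simp: lookup_add lookup_ev)
  moreover have "degW W (b + ev i) = Suc k" using b(3) i(1) by (simp add: degW_add degW_ev)
  ultimately show ?case by blast
qed

lemma comb:
  fixes W :: "'v::finite set" and X :: "'v expo set"
  assumes X: "upc X" "G0 W D \<subseteq> X" and D: "D \<ge> 1" and t: "t \<ge> card W * card W * D" "t \<ge> 1"
    and a: "D * t \<le> degW W a"
  shows "a \<in> pw X t"
proof -
  obtain b where b: "\<forall>i. Poly_Mapping.lookup b i \<le> Poly_Mapping.lookup a i" "b \<in> Fsupp W" "degW W b = D * t"
    using shrink[OF a] by blast
  have "W \<noteq> {}"
  proof
    assume "W = {}" then have "degW W b = 0" unfolding degW_def by simp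
    then show False using b(3) D t(2) by simp
  qed
  have finW: "finite W" by simp
  define mx where "mx = Max ((\<lambda>j. Poly_Mapping.lookup b j) ` W)"
  have "mx \<in> (\<lambda>j. Poly_Mapping.lookup b j) ` W" unfolding mx_def using \<open>W \<noteq> {}\<close> finW by (intro Max_in) auto
  then obtain i0 where i0a: "i0 \<in> W" "Poly_Mapping.lookup b i0 = mx" by auto
  have "\<forall>j\<in>W. Poly_Mapping.lookup b j \<le> mx" unfolding mx_def using finW by auto
  then have i0: "i0 \<in> W" "\<forall>j\<in>W. Poly_Mapping.lookup b j \<le> Poly_Mapping.lookup b i0" using i0a by auto
  define n where "n = card W"
  have n: "n \<ge> 1" unfolding n_def using \<open>W \<noteq> {}\<close> finW by (simp add: Suc_le_eq card_gt_0_iff)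
  have "degW W b \<le> n * Poly_Mapping.lookup b i0"
    unfolding degW_def n_def using sum_mono[of W "\<lambda>j. Poly_Mapping.lookup b j" "\<lambda>_. Poly_Mapping.lookup b i0"] i0(2)
    by simp
  then have "D * (n * n * D) \<le> n * Poly_Mapping.lookup b i0" using b(3) t(1) unfolding n_def[symmetric]
    by (metis dual_order.trans mult_le_mono2)
  then have "n * (D * n * D) \<le> n * Poly_Mapping.lookup b i0" by (simp add: algebra_simps)
  then have big: "D * n * D \<le> Poly_Mapping.lookup b i0" using n by simp
  have "(\<Sum>j\<in>W - {i0}. Poly_Mapping.lookup b j mod D) \<le> (\<Sum>j\<in>W - {i0}. D)"
    by (rule sum_mono) (use D in \<open>simp add: less_imp_le\<close>)
  also have "\<dots> \<le> n * D" unfolding n_def using finW by (simp add: card_mono)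
  finally have "(D - 1) * (\<Sum>j\<in>W - {i0}. Poly_Mapping.lookup b j mod D) \<le> (D - 1) * (n * D)"
    by (rule mult_le_mono2)
  also have "\<dots> \<le> D * n * D" by (simp add: algebra_simps)
  finally have inv: "(D - 1) * (\<Sum>j\<in>W - {i0}. Poly_Mapping.lookup b j mod D) \<le> Poly_Mapping.lookup b i0"
    using big by simp
  have "b \<in> pw X t" by (rule comb_core[OF X D i0(1) b(2) b(3) inv])
  moreover have "a = b + (a - b)" by (rule le_expo) (use b(1) in simp)
  ultimately show ?thesis using upcD[OF upc_pw[OF X(1)]] by metis
qed


lemma monom_deg_degW: "monom_deg a = degW UNIV a"
  unfolding monom_deg_def degW_def ..

lemma degW_split: "degW UNIV (a :: 'v::finite expo) = degW F a + degW (-F) a"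
proof -
  have "degW UNIV a = (\<Sum>i\<in>F \<union> -F. Poly_Mapping.lookup a i)" unfolding degW_def by simp
  also have "\<dots> = degW F a + degW (-F) a" unfolding degW_def by (rule sum.union_disjoint) auto
  finally show ?thesis .
qed

lemma degW_zero_iff: "degW (-F) a = 0 \<longleftrightarrow> (a :: 'v::finite expo) \<in> Fsupp F"
  using Z_degW[of a F] not_Z_Fsupp[of a F] by auto

lemma monom_power: "monom e ^ k = (monom (nsm k e) :: ('v::finite, 'k::field) mpoly)"
  by (induction k) (simp_all add: monom_0 nsm_Suc monom_mult)

lemma nsm_in_pw: "x \<in> X \<Longrightarrow> nsm t x \<in> pw X t"
  by (induction t) (auto simp: nsm_Suc sump_def)

lemma sump_in: "x \<in> X \<Longrightarrow> y \<in> pw X t \<Longrightarrow> x + y \<in> pw X (Suc t)"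
  by (auto simp: sump_def)

lemma pw_satS: "pw (satS F S) t \<subseteq> satS F (pw S t)"
proof (induction t)
  case 0 then show ?case by (auto simp: satS_def intro: Fsupp_0)
next
  case (Suc t)
  show ?case
  proof
    fix x assume "x \<in> pw (satS F S) (Suc t)"
    then obtain y z where yz: "x = y + z" "y \<in> satS F S" "z \<in> pw (satS F S) t" by (auto simp: sump_def)
    obtain c1 where c1: "c1 \<in> Fsupp F" "y + c1 \<in> S" using yz(2) unfolding satS_def by auto
    obtain c2 where c2: "c2 \<in> Fsupp F" "z + c2 \<in> pw S t" using yz(3) Suc unfolding satS_def by auto
    have "x + (c1 + c2) = (y + c1) + (z + c2)" using yz(1) by (simp add: ac_simps)
    then have "x + (c1 + c2) \<in> pw S (Suc t)" using c1 c2 by (auto simp: sump_def)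
    then show "x \<in> satS F (pw S (Suc t))" unfolding satS_def using Fsupp_add[OF c1(1) c2(1)] by blast
  qed
qed

lemma var_prod_monom: "var i ^ n * var j = (monom (nsm n (ev i) + ev j) :: ('v::finite, 'k::field) mpoly)"
  by (simp add: var_monom monom_power monom_mult)

lemma Fsupp_nsm: "x \<in> Fsupp F \<Longrightarrow> nsm t x \<in> Fsupp F"
  unfolding Fsupp_def by simp

lemma P_ideal_inj:
  assumes "(P_ideal F :: ('v::finite, 'k::field) mpoly set) = P_ideal G" shows "F = G"
proof -
  have "Z F = Z G" using assms unfolding P_ideal_MI by (rule MI_inj)
  then have "ev i \<in> Z F \<longleftrightarrow> ev i \<in> Z G" for i by simp
  then show ?thesis unfolding ev_in_Z by auto
qed

lemma P_ideal_anti: "F \<subseteq> G \<Longrightarrow> (P_ideal G :: ('v::finite, 'k::field) mpoly set) \<subseteq> P_ideal F"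
  unfolding P_ideal_MI by (rule MI_mono) (auto simp: Z_def)

lemma is_ideal_MI_S: "upc S \<Longrightarrow> is_ideal (MI S :: ('v::finite, 'k::field) mpoly set)"
  by (rule MI_ideal)

section \<open>Components of monomial ideals\<close>

lemma comp_eq:
  fixes S :: "'v::finite expo set"
  assumes S: "upc S" and F: "minimal_prime (P_ideal F) (MI S :: ('v, 'k::field) mpoly set)"
  shows "primary_component (MI S :: ('v, 'k) mpoly set) (P_ideal F) = MI (satS F S)"
    and "primary_ideal (MI (satS F S) :: ('v, 'k) mpoly set)"
    and "ideal_radical (MI (satS F S) :: ('v, 'k) mpoly set) = P_ideal F"
proof -
  have ex: "\<exists>Qs. minimal_primary_decomposition (MI S :: ('v, 'k) mpoly set) Qs" by (rule mpd_exists[OF S])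
  have se: "sat (MI S) (P_ideal F) = (MI (satS F S) :: ('v, 'k) mpoly set)" by (rule sat_MI[OF S])
  show "primary_component (MI S :: ('v, 'k) mpoly set) (P_ideal F) = MI (satS F S)"
    using primary_component_eq_sat[OF F ex] unfolding se .
  show "primary_ideal (MI (satS F S) :: ('v, 'k) mpoly set)"
    using primary_component_radical(2)[OF F ex] unfolding se .
  show "ideal_radical (MI (satS F S) :: ('v, 'k) mpoly set) = P_ideal F"
    using primary_component_radical(1)[OF F ex] unfolding se .
qed

lemma symb_eq:
  fixes S :: "'v::finite expo set"
  assumes S: "upc S" and t: "t \<ge> 1"
  shows "symbolic_power (MI S :: ('v, 'k::field) mpoly set) t
       = \<Inter>((\<lambda>F. MI (satS F (pw S t))) ` calF (MI S :: ('v, 'k) mpoly set))"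
proof -
  let ?I = "MI S :: ('v, 'k) mpoly set"
  have It: "ideal_pow ?I t = MI (pw S t)" by (rule ideal_pow_MI[OF S])
  have mpt: "minimal_prime P (MI (pw S t) :: ('v, 'k) mpoly set) \<longleftrightarrow> minimal_prime P ?I" for P
    using minimal_prime_pow[OF MI_ideal[OF S, where 'k='k] t] unfolding It .
  have pc: "primary_component (ideal_pow ?I t) (P_ideal F) = MI (satS F (pw S t))"
    if "F \<in> calF ?I" for F
  proof -
    have "minimal_prime (P_ideal F) (MI (pw S t) :: ('v, 'k) mpoly set)"
      using that mpt unfolding calF_def by simp
    then show ?thesis using comp_eq(1)[OF upc_pw[OF S]] It by simp
  qed
  have "{primary_component (ideal_pow ?I t) P | P. minimal_prime P ?I}
      = (\<lambda>F. MI (satS F (pw S t))) ` calF ?I"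
  proof
    show "{primary_component (ideal_pow ?I t) P | P. minimal_prime P ?I} \<subseteq> (\<lambda>F. MI (satS F (pw S t))) ` calF ?I"
    proof clarify
      fix P assume P: "minimal_prime P ?I"
      obtain G where G: "P = P_ideal G" using minimal_prime_monomial[OF S P] by blast
      then have "G \<in> calF ?I" using P unfolding calF_def by simp
      then show "primary_component (ideal_pow ?I t) P \<in> (\<lambda>F. MI (satS F (pw S t))) ` calF ?I"
        using pc G by simp
    qed
    show "(\<lambda>F. MI (satS F (pw S t))) ` calF ?I \<subseteq> {primary_component (ideal_pow ?I t) P | P. minimal_prime P ?I}"
    proof clarify
      fix F assume F: "F \<in> calF ?I"
      then have "minimal_prime (P_ideal F) ?I" unfolding calF_def by simp
      then show "\<exists>P. MI (satS F (pw S t)) = primary_component (ideal_pow ?I t) P \<and> minimal_prime P ?I"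
        using pc[OF F] by metis
    qed
  qed
  then show ?thesis unfolding symbolic_power_def by simp
qed

lemma gen_props:
  fixes S :: "'v::finite expo set" and A :: "'v expo set"
  assumes S: "upc S" and F: "F \<in> calF (MI S :: ('v, 'k::field) mpoly set)"
    and A: "I_comp (MI S :: ('v, 'k) mpoly set) F = ideal_gen (monom ` A)" and Ad: "\<forall>a\<in>A. monom_deg a = D"
  shows "satS F S = up A"
    and "\<And>a. a \<in> A \<Longrightarrow> a \<in> Fsupp (-F) \<and> degW (-F) a = D"
    and "0 \<notin> satS F S"
    and "\<And>k. k \<notin> F \<Longrightarrow> nsm D (ev k) \<in> satS F S \<and> D \<ge> 1"
proof -
  have mp: "minimal_prime (P_ideal F) (MI S :: ('v, 'k) mpoly set)" using F unfolding calF_def by simp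
  note ce = comp_eq[OF S mp]
  have "(MI (satS F S) :: ('v, 'k) mpoly set) = MI (up A)"
    using A ce(1) unfolding I_comp_def by (simp add: ideal_gen_monom)
  then show eq: "satS F S = up A" by (rule MI_inj)
  show z: "0 \<notin> satS F S"
  proof
    assume "0 \<in> satS F S"
    then have "(1 :: ('v, 'k) mpoly) \<in> MI (satS F S)" using monom_in_MI[of 0 "satS F S", where 'k='k] by (simp add: monom_0)
    then have "MI (satS F S) = (UNIV :: ('v, 'k) mpoly set)"
      using MI_ideal[OF upc_satS[OF S], where 'k='k] ideal_mult_right by (metis UNIV_eq_I mult_1)
    then show False using ce(2) unfolding primary_ideal_def by simp
  qed
  show supp: "a \<in> Fsupp (-F) \<and> degW (-F) a = D" if a: "a \<in> A" for a
  proof -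
    have "a \<in> Fsupp (-F)"
    proof (rule ccontr)
      assume "a \<notin> Fsupp (-F)"
      then obtain k where k: "k \<in> F" "Poly_Mapping.lookup a k \<noteq> 0" unfolding Fsupp_def by auto
      have ak: "a = ev k + (a - ev k)" by (rule le_expo) (use k in \<open>auto simp: lookup_ev\<close>)
      have "a \<in> satS F S" using a eq sub_up by blast
      moreover have "ev k \<in> Fsupp F" using k(1) unfolding Fsupp_def by (auto simp: lookup_ev)
      ultimately have "a - ev k \<in> satS F S" using finv_satS[of F S] ak unfolding finv_def
        by (metis add.commute)
      then obtain g r where gr: "a - ev k = g + r" "g \<in> A" using eq unfolding up_def by blast
      have "monom_deg a = 1 + monom_deg (a - ev k)"
        using ak by (metis monom_deg_degW degW_add degW_ev UNIV_I)
      also have "\<dots> = 1 + monom_deg g + monom_deg r" using gr by (simp add: monom_deg_degW degW_add)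
      finally show False using Ad a gr(2) by simp
    qed
    moreover have "degW F a = 0" using \<open>a \<in> Fsupp (-F)\<close>
      by (metis degW_zero_iff double_complement)
    moreover have "degW UNIV a = D" using Ad a by (simp add: monom_deg_degW)
    ultimately show ?thesis using degW_split[of a F] by simp
  qed
  show "nsm D (ev k) \<in> satS F S \<and> D \<ge> 1" if k: "k \<notin> F" for k
  proof -
    have "var k \<in> (P_ideal F :: ('v, 'k) mpoly set)" unfolding P_ideal_MI var_monom
      using k by (simp add: monom_in_MI ev_in_Z)
    then obtain N where "var k ^ N \<in> (MI (satS F S) :: ('v, 'k) mpoly set)"
      using ce(3) unfolding ideal_radical_def by auto
    then have "nsm N (ev k) \<in> satS F S" by (simp add: var_monom monom_power monom_in_MI)
    then obtain g r where gr: "nsm N (ev k) = g + r" "g \<in> A" using eq unfolding up_def by blast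
    have g0: "Poly_Mapping.lookup g l = 0" if "l \<noteq> k" for l
    proof -
      have "Poly_Mapping.lookup (nsm N (ev k)) l = 0" using that by (simp add: lookup_ev)
      then show ?thesis using gr(1) by (metis add_is_0 lookup_add)
    qed
    have "degW (-F) g = D" using supp[OF gr(2)] by simp
    moreover have "degW (-F) g = Poly_Mapping.lookup g k"
    proof -
      have "degW (-F) g = (\<Sum>l\<in>-F. if l = k then Poly_Mapping.lookup g k else 0)"
        unfolding degW_def by (intro sum.cong) (auto simp: g0)
      also have "\<dots> = Poly_Mapping.lookup g k" using k by simp
      finally show ?thesis .
    qed
    ultimately have "g = nsm D (ev k)"
      by (intro expo_eqI) (auto simp: lookup_ev g0)
    then have "nsm D (ev k) \<in> satS F S" using gr(2) eq sub_up by blast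
    moreover have "D \<ge> 1"
    proof (rule ccontr)
      assume "\<not> D \<ge> 1" then have "D = 0" by simp
      then have "nsm D (ev k) = 0" by (intro expo_eqI) simp
      then show False using z \<open>nsm D (ev k) \<in> satS F S\<close> by simp
    qed
    ultimately show ?thesis by simp
  qed
qed


lemma degW_two:
  fixes g :: "'v::finite expo"
  assumes "i \<in> W" "j \<in> W" "i \<noteq> j" "\<And>l. l \<in> W \<Longrightarrow> l \<noteq> i \<Longrightarrow> l \<noteq> j \<Longrightarrow> Poly_Mapping.lookup g l = 0"
  shows "degW W g = Poly_Mapping.lookup g i + Poly_Mapping.lookup g j"
proof -
  have "degW W g = (\<Sum>l\<in>W. (if l = i then Poly_Mapping.lookup g i else 0) + (if l = j then Poly_Mapping.lookup g j else 0))"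
    unfolding degW_def by (intro sum.cong) (use assms in auto)
  also have "\<dots> = Poly_Mapping.lookup g i + Poly_Mapping.lookup g j"
    using assms(1,2) by (simp add: sum.distrib)
  finally show ?thesis .
qed

lemma up_degW:
  assumes "\<And>a. a \<in> A \<Longrightarrow> degW W a = D"
  shows "up A \<subseteq> {a. D \<le> degW W a}"
  using assms unfolding up_def by (auto simp: degW_add)

lemma jlemma:
  fixes A :: "'v::finite expo set"
  assumes Aprop: "\<And>a. a \<in> A \<Longrightarrow> a \<in> Fsupp (-F) \<and> degW (-F) a = D"
    and uA: "nsm (D - 1) (ev i) + ev j \<notin> A" and ij: "i \<noteq> j" "i \<notin> F" "j \<notin> F"
  shows "x \<in> pw (up A) t \<Longrightarrow> degW (-F) x = D * t \<Longrightarrow>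
    (\<forall>l. l \<notin> F \<longrightarrow> l \<noteq> i \<longrightarrow> l \<noteq> j \<longrightarrow> Poly_Mapping.lookup x l = 0) \<Longrightarrow>
    Poly_Mapping.lookup x j \<le> 1 \<Longrightarrow> Poly_Mapping.lookup x j = 0"
proof (induction t arbitrary: x)
  case 0
  then have "degW (-F) x = 0" by simp
  then have "x \<in> Fsupp F" by (simp add: degW_zero_iff)
  then show ?case using ij(3) unfolding Fsupp_def by simp
next
  case (Suc t)
  obtain y z where yz: "x = y + z" "y \<in> up A" "z \<in> pw (up A) t" using Suc.prems(1) by (auto simp: sump_def)
  obtain g r where gr: "y = g + r" "g \<in> A" using yz(2) unfolding up_def by blast
  have dg: "degW (-F) g = D" using Aprop[OF gr(2)] by simp
  have gF: "g \<in> Fsupp (-F)" using Aprop[OF gr(2)] by simp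
  have "pw (up A) t \<subseteq> {a. t * D \<le> degW (-F) a}"
    by (rule pw_degW[OF up_degW]) (use Aprop in simp)
  then have dz: "t * D \<le> degW (-F) z" using yz(3) by auto
  have "degW (-F) x = D + degW (-F) r + degW (-F) z" using yz(1) gr(1) dg by (simp add: degW_add)
  then have dr: "degW (-F) r = 0" and dz2: "degW (-F) z = D * t" using Suc.prems(2) dz by (simp_all add: algebra_simps)
  have rF: "r \<in> Fsupp F" using dr by (simp add: degW_zero_iff)
  have lx: "Poly_Mapping.lookup x l = Poly_Mapping.lookup g l + Poly_Mapping.lookup r l + Poly_Mapping.lookup z l" for l
    using yz(1) gr(1) by (simp add: lookup_add)
  have r0: "Poly_Mapping.lookup r l = 0" if "l \<notin> F" for l using rF that unfolding Fsupp_def by simp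
  have g0: "Poly_Mapping.lookup g l = 0" if "l \<notin> F" "l \<noteq> i" "l \<noteq> j" for l
    using Suc.prems(3) that lx[of l] by simp
  have z0: "\<forall>l. l \<notin> F \<longrightarrow> l \<noteq> i \<longrightarrow> l \<noteq> j \<longrightarrow> Poly_Mapping.lookup z l = 0"
    using Suc.prems(3) lx by simp
  have gj: "Poly_Mapping.lookup g j = 0"
  proof (rule ccontr)
    assume "Poly_Mapping.lookup g j \<noteq> 0"
    then have gj1: "Poly_Mapping.lookup g j = 1" using Suc.prems(4) lx[of j] by simp
    have "degW (-F) g = Poly_Mapping.lookup g i + Poly_Mapping.lookup g j"
      by (rule degW_two) (use ij g0 in auto)
    then have gi: "Poly_Mapping.lookup g i = D - 1" using dg gj1 by simp
    have "g = nsm (D - 1) (ev i) + ev j"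
    proof (rule expo_eqI)
      fix l
      show "Poly_Mapping.lookup g l = Poly_Mapping.lookup (nsm (D - 1) (ev i) + ev j) l"
      proof (cases "l \<in> F")
        case True
        then have "Poly_Mapping.lookup g l = 0" using gF unfolding Fsupp_def by simp
        then show ?thesis using True ij by (auto simp: lookup_add lookup_ev)
      next
        case False
        then show ?thesis using g0[OF False] gi gj1 ij by (auto simp: lookup_add lookup_ev)
      qed
    qed
    then show False using uA gr(2) by simp
  qed
  have "Poly_Mapping.lookup z j \<le> 1" using Suc.prems(4) lx[of j] by simp
  then have "Poly_Mapping.lookup z j = 0" using Suc.IH[OF yz(3) dz2 z0] by simp
  then show ?case using lx[of j] gj r0[OF ij(3)] by simp
qed

lemma nsm_nsm: "nsm (a * b) x = nsm b (nsm a x)"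
  by (rule expo_eqI) (simp add: algebra_simps)

lemma finite_calF: "finite (calF (I :: ('v::finite, 'k::field) mpoly set))"
  by (rule finite_subset[of _ UNIV]) simp_all


lemma monomialE_aux:
  assumes "monomial_ideal (I :: ('v, 'k::field) mpoly set)"
  shows "\<exists>S. upc S \<and> I = MI S"
  using monomial_idealE[OF assms] by blast

lemma rhs_to_lhs:
  fixes S :: "'v::finite expo set" and d :: "'v set \<Rightarrow> nat"
  assumes S: "upc S"
    and Af: "\<And>F. F \<in> calF (MI S :: ('v, 'k::field) mpoly set) \<Longrightarrow>
        (\<forall>a\<in>Af F. monom_deg a = d F) \<and> I_comp (MI S :: ('v, 'k) mpoly set) F = ideal_gen (monom ` Af F)"
    and R: "\<forall>F\<in>calF (MI S :: ('v, 'k) mpoly set). \<forall>i j. i \<notin> F \<and> j \<notin> F \<longrightarrow>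
        var i ^ (d F - 1) * var j \<in> I_comp (MI S :: ('v, 'k) mpoly set) F"
  shows "\<exists>t0. \<forall>t\<ge>t0. integrally_closed (symbolic_power (MI S :: ('v, 'k) mpoly set) t)"
proof -
  let ?I = "MI S :: ('v, 'k) mpoly set"
  define t0 where "t0 = Suc (\<Sum>F\<in>calF ?I. card (-F) * card (-F) * d F)"
  have "integrally_closed (symbolic_power ?I t)" if t: "t \<ge> t0" for t
  proof -
    have t1: "t \<ge> 1" using t unfolding t0_def by simp
    have tF: "t \<ge> card (-F) * card (-F) * d F" if F: "F \<in> calF ?I" for F
    proof -
      have "card (-F) * card (-F) * d F \<le> (\<Sum>F\<in>calF ?I. card (-F) * card (-F) * d F)"
        by (rule member_le_sum) (use F finite_calF in auto)
      then show ?thesis using t unfolding t0_def by simp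
    qed
    have comp: "\<exists>m. satS F (pw S t) = {a. m \<le> degW (-F) a}" if F: "F \<in> calF ?I" for F
    proof (cases "F = UNIV")
      case True
      have mp: "minimal_prime (P_ideal F) ?I" using F unfolding calF_def by simp
      then have "?I \<subseteq> P_ideal F" unfolding minimal_prime_def by simp
      moreover have "Z F = {}" using True unfolding Z_def by simp
      ultimately have "?I \<subseteq> MI {}" unfolding P_ideal_MI by simp
      then have "S = {}" using monom_in_MI[of _ S, where 'k='k] monom_in_MI[of _ "{}", where 'k='k] by blast
      then have "pw S t = {}" using t1 by (cases t) (simp_all add: sump_def)
      then have "satS F (pw S t) = {a. 1 \<le> degW (-F) a}" using True by (simp add: satS_def degW_def)
      then show ?thesis by blast
    next
      case False
      then obtain k where k: "k \<notin> F" by auto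
      obtain A where A: "\<forall>a\<in>A. monom_deg a = d F" "I_comp ?I F = ideal_gen (monom ` A)"
        using Af[OF F] by blast
      note gp = gen_props[OF S F A(2) A(1)]
      have D1: "d F \<ge> 1" using gp(4)[OF k] by simp
      have mp: "minimal_prime (P_ideal F) ?I" using F unfolding calF_def by simp
      have Icomp: "I_comp ?I F = MI (satS F S)" unfolding I_comp_def by (rule comp_eq(1)[OF S mp])
      have G0sub: "G0 (-F) (d F) \<subseteq> satS F S"
      proof
        fix x assume "x \<in> G0 (-F) (d F)"
        then obtain i j where ij: "x = nsm (d F - 1) (ev i) + ev j" "i \<notin> F" "j \<notin> F" unfolding G0_def by auto
        have "var i ^ (d F - 1) * var j \<in> I_comp ?I F" using R F ij(2,3) by blast
        then have "(monom x :: ('v, 'k) mpoly) \<in> MI (satS F S)" using Icomp ij(1) by (simp add: var_prod_monom)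
        then show "x \<in> satS F S" by (simp add: monom_in_MI)
      qed
      have "satS F (pw S t) = {a. d F * t \<le> degW (-F) a}"
      proof
        show "satS F (pw S t) \<subseteq> {a. d F * t \<le> degW (-F) a}"
        proof
          fix a assume "a \<in> satS F (pw S t)"
          then obtain c where c: "c \<in> Fsupp F" "a + c \<in> pw S t" unfolding satS_def by auto
          have "pw S t \<subseteq> pw (satS F S) t" by (rule pw_mono[OF sub_satS])
          also have "\<dots> = pw (up A) t" using gp(1) by simp
          also have "\<dots> \<subseteq> {a. t * d F \<le> degW (-F) a}"
            by (rule pw_degW[OF up_degW]) (use gp(2) in simp)
          finally have "t * d F \<le> degW (-F) (a + c)" using c(2) by auto
          moreover have "degW (-F) c = 0" using c(1) by (simp add: degW_zero_iff)
          ultimately show "a \<in> {a. d F * t \<le> degW (-F) a}" by (simp add: degW_add mult.commute)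
        qed
        show "{a. d F * t \<le> degW (-F) a} \<subseteq> satS F (pw S t)"
        proof
          fix a assume "a \<in> {a. d F * t \<le> degW (-F) a}"
          then have "a \<in> pw (satS F S) t"
            by (intro comb[OF upc_satS[OF S] G0sub D1 tF[OF F] t1]) simp
          then show "a \<in> satS F (pw S t)" using pw_satS by blast
        qed
      qed
      then show ?thesis by blast
    qed
    have "symbolic_power ?I t = \<Inter>((\<lambda>F. MI (satS F (pw S t))) ` calF ?I)"
      by (rule symb_eq[OF S t1])
    moreover have "integrally_closed (\<Inter>((\<lambda>F. MI (satS F (pw S t)) :: ('v, 'k) mpoly set) ` calF ?I))"
    proof (rule integrally_closed_Inter)
      fix J assume "J \<in> (\<lambda>F. MI (satS F (pw S t)) :: ('v, 'k) mpoly set) ` calF ?I"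
      then obtain F where F: "F \<in> calF ?I" "J = MI (satS F (pw S t))" by auto
      obtain m where "satS F (pw S t) = {a. m \<le> degW (-F) a}" using comp[OF F(1)] by blast
      then have "J = MI {a. m \<le> degW (-F) a}" using F(2) by simp
      moreover have "integrally_closed (MI {a. m \<le> degW (-F) a} :: ('v, 'k) mpoly set)"
        by (rule degset_closed)
      moreover have "is_ideal (MI {a. m \<le> degW (-F) a} :: ('v, 'k) mpoly set)"
        by (rule MI_ideal[OF upc_degset])
      ultimately show "integrally_closed J \<and> is_ideal J" by simp
    qed
    ultimately show ?thesis by simp
  qed
  then show ?thesis by blast
qed

lemma lhs_to_rhs:
  fixes S :: "'v::finite expo set" and d :: "'v set \<Rightarrow> nat"
  assumes S: "upc S"
    and Af: "\<And>F. F \<in> calF (MI S :: ('v, 'k::field) mpoly set) \<Longrightarrow>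
        (\<forall>a\<in>Af F. monom_deg a = d F) \<and> I_comp (MI S :: ('v, 'k) mpoly set) F = ideal_gen (monom ` Af F)"
    and L: "\<exists>t0. \<forall>t\<ge>t0. integrally_closed (symbolic_power (MI S :: ('v, 'k) mpoly set) t)"
    and F: "F \<in> calF (MI S :: ('v, 'k) mpoly set)" and ij: "i \<notin> F" "j \<notin> F"
  shows "var i ^ (d F - 1) * var j \<in> I_comp (MI S :: ('v, 'k) mpoly set) F"
proof -
  let ?I = "MI S :: ('v, 'k) mpoly set"
  obtain t0 where t0: "\<And>t. t \<ge> t0 \<Longrightarrow> integrally_closed (symbolic_power ?I t)" using L by blast
  define t where "t = max t0 1"
  have t1: "t \<ge> 1" and cl: "integrally_closed (symbolic_power ?I t)" using t0 unfolding t_def by auto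
  define D where "D = d F"
  define A where "A = Af F"
  have A: "\<forall>a\<in>A. monom_deg a = D" "I_comp ?I F = ideal_gen (monom ` A)"
    using Af[OF F] unfolding A_def D_def by auto
  note gp = gen_props[OF S F A(2) A(1)]
  have D1: "D \<ge> 1" using gp(4)[OF ij(1)] by simp
  have mp: "minimal_prime (P_ideal F) ?I" using F unfolding calF_def by simp
  have Icomp: "I_comp ?I F = MI (satS F S)" unfolding I_comp_def by (rule comp_eq(1)[OF S mp])
  define u where "u = nsm (D - 1) (ev i) + ev j"
  have "u \<in> satS F S"
  proof (rule ccontr)
    assume uS: "u \<notin> satS F S"
    have "i \<noteq> j"
    proof
      assume "i = j"
      then have "u = nsm D (ev i)" unfolding u_def using nsm_ev_Suc[OF D1] by simp
      then show False using uS gp(4)[OF ij(1)] by simp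
    qed
    have uA: "u \<notin> A" using uS gp(1) sub_up by blast
    have exw: "\<exists>w. w \<in> Fsupp F \<and> w \<in> satS G S" if G: "G \<in> calF ?I - {F}" for G
    proof -
      have "\<exists>k. k \<in> F \<and> k \<notin> G"
      proof (rule ccontr)
        assume "\<not> ?thesis"
        then have "F \<subseteq> G" by auto
        then have "(P_ideal G :: ('v, 'k) mpoly set) \<subseteq> P_ideal F" by (rule P_ideal_anti)
        moreover have "prime_ideal (P_ideal G :: ('v, 'k) mpoly set)" "?I \<subseteq> P_ideal G"
          using G unfolding calF_def minimal_prime_def by auto
        ultimately have "P_ideal G = (P_ideal F :: ('v, 'k) mpoly set)" using mp unfolding minimal_prime_def by blast
        then have "G = F" by (rule P_ideal_inj)
        then show False using G by simp
      qed
      then obtain k where k: "k \<in> F" "k \<notin> G" by auto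
      have GG: "G \<in> calF ?I" using G by simp
      obtain AG where AG: "\<forall>a\<in>AG. monom_deg a = d G" "I_comp ?I G = ideal_gen (monom ` AG)"
        using Af[OF GG] by blast
      have "nsm (d G) (ev k) \<in> satS G S" using gen_props(4)[OF S GG AG(2) AG(1) k(2)] by simp
      moreover have "nsm (d G) (ev k) \<in> Fsupp F" using k(1) unfolding Fsupp_def by (auto simp: lookup_ev)
      ultimately show ?thesis by blast
    qed
    have "\<forall>G\<in>calF ?I - {F}. \<exists>w. w \<in> Fsupp F \<and> w \<in> satS G S" using exw by blast
    then have "\<exists>wf. \<forall>G\<in>calF ?I - {F}. wf G \<in> Fsupp F \<and> wf G \<in> satS G S" by (rule bchoice)
    then obtain wf where wf: "\<And>G. G \<in> calF ?I - {F} \<Longrightarrow> wf G \<in> Fsupp F \<and> wf G \<in> satS G S" by blast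
    define \<omega> where "\<omega> = sum wf (calF ?I - {F})"
    have \<omega>F: "\<omega> \<in> Fsupp F" unfolding \<omega>_def using wf by (intro Fsupp_sum) blast
    have \<omega>G: "\<omega> \<in> satS G S" if G: "G \<in> calF ?I - {F}" for G
    proof -
      have "\<omega> = wf G + sum wf (calF ?I - {F} - {G})" unfolding \<omega>_def using G finite_calF
        by (simp add: sum.remove)
      then show ?thesis using wf[OF G] upcD[OF upc_satS[OF S]] by metis
    qed
    define \<phi> where "\<phi> = nsm t \<omega>"
    have \<phi>F: "\<phi> \<in> Fsupp F" unfolding \<phi>_def by (rule Fsupp_nsm[OF \<omega>F])
    define e1 where "e1 = nsm (D * t) (ev i) + \<phi>"
    define e2 where "e2 = nsm (D * t - D) (ev i) + nsm D (ev j) + \<phi>"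
    define ef where "ef = nsm (D * t - 1) (ev i) + ev j + \<phi>"
    let ?J = "symbolic_power ?I t"
    have Jeq: "?J = \<Inter>((\<lambda>G. MI (satS G (pw S t))) ` calF ?I)" by (rule symb_eq[OF S t1])
    have upcG: "upc (satS G (pw S t))" for G by (rule upc_satS[OF upc_pw[OF S]])
    have inJ: "(monom e :: ('v, 'k) mpoly) \<in> ?J" if "\<And>G. G \<in> calF ?I \<Longrightarrow> e \<in> satS G (pw S t)" for e
      unfolding Jeq using that by (auto simp: monom_in_MI)
    have iF: "nsm D (ev i) \<in> satS F S" "nsm D (ev j) \<in> satS F S" using gp(4) ij by auto
    obtain t' where t': "t = Suc t'" using t1 by (cases t) auto
    have e1J: "(monom e1 :: ('v, 'k) mpoly) \<in> ?J"
    proof (rule inJ)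
      fix G assume G: "G \<in> calF ?I"
      show "e1 \<in> satS G (pw S t)"
      proof (cases "G = F")
        case True
        have "nsm (D * t) (ev i) \<in> pw (satS F S) t" unfolding nsm_nsm by (rule nsm_in_pw[OF iF(1)])
        then have "nsm (D * t) (ev i) \<in> satS F (pw S t)" using pw_satS by blast
        then show ?thesis unfolding e1_def True using upcD[OF upcG] by blast
      next
        case False
        then have "\<phi> \<in> pw (satS G S) t" unfolding \<phi>_def using G \<omega>G by (intro nsm_in_pw) simp
        then have "\<phi> \<in> satS G (pw S t)" using pw_satS by blast
        then show ?thesis unfolding e1_def using upcD[OF upcG] by (metis add.commute)
      qed
    qed
    have e2J: "(monom e2 :: ('v, 'k) mpoly) \<in> ?J"
    proof (rule inJ)
      fix G assume G: "G \<in> calF ?I"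
      show "e2 \<in> satS G (pw S t)"
      proof (cases "G = F")
        case True
        have "nsm (D * t - D) (ev i) = nsm t' (nsm D (ev i))" unfolding t' by (simp add: nsm_nsm[symmetric])
        then have "nsm D (ev j) + nsm (D * t - D) (ev i) \<in> pw (satS F S) t"
          unfolding t' using sump_in[OF iF(2) nsm_in_pw[OF iF(1)]] by simp
        then have "nsm D (ev j) + nsm (D * t - D) (ev i) \<in> satS F (pw S t)" using pw_satS by blast
        then show ?thesis unfolding e2_def True using upcD[OF upcG] by (metis add.commute)
      next
        case False
        then have "\<phi> \<in> pw (satS G S) t" unfolding \<phi>_def using G \<omega>G by (intro nsm_in_pw) simp
        then have "\<phi> \<in> satS G (pw S t)" using pw_satS by blast
        then show ?thesis unfolding e2_def using upcD[OF upcG] by (metis add.commute)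
      qed
    qed
    have phi_ij: "Poly_Mapping.lookup \<phi> i = 0" "Poly_Mapping.lookup \<phi> j = 0"
      using \<phi>F ij unfolding Fsupp_def by auto
    obtain D' where D': "D = Suc D'" using D1 by (cases D) auto
    have expeq: "nsm D ef = nsm (D - 1) e1 + e2"
    proof (rule expo_eqI)
      fix l
      show "Poly_Mapping.lookup (nsm D ef) l = Poly_Mapping.lookup (nsm (D - 1) e1 + e2) l"
        using phi_ij \<open>i \<noteq> j\<close> unfolding ef_def e1_def e2_def D' t'
        by (cases "l = i"; cases "l = j") (auto simp: lookup_add lookup_ev algebra_simps)
    qed
    define f where "f = (monom ef :: ('v, 'k) mpoly)"
    have fD: "f ^ D = monom e1 ^ (D - 1) * monom e2"
      unfolding f_def by (simp add: monom_power monom_mult expeq)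
    have Jid: "is_ideal ?J"
      unfolding Jeq by (rule ideal_Inter) (auto intro: MI_ideal[OF upcG])
    have "f ^ D \<in> ideal_pow ?J D"
    proof -
      have "monom e2 * monom e1 ^ (D - 1) \<in> ideal_pow ?J (Suc (D - 1))"
        by (rule ideal_pow_Suc_mem[OF e2J ideal_pow_mem_power[OF e1J]])
      then show ?thesis using fD D1 by (simp add: mult.commute)
    qed
    have "f \<in> integral_closure ?J"
      unfolding integral_closure_def integral_over_ideal_def
    proof (intro CollectI exI[of _ D] conjI exI[of _ "\<lambda>k. if k = D then - (f ^ D) else 0"] ballI)
      show "1 \<le> D" by (rule D1)
      fix k assume "k \<in> {1..D}"
      show "(if k = D then - (f ^ D) else 0) \<in> ideal_pow ?J k"
        using \<open>f ^ D \<in> ideal_pow ?J D\<close> ideal_uminus[OF ideal_pow_ideal] ideal_0[OF ideal_pow_ideal] by auto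
    next
      have "(\<Sum>k = 1..D. (if k = D then - (f ^ D) else 0) * f ^ (D - k)) = (\<Sum>k = 1..D. if k = D then - (f ^ D) else 0)"
        by (intro sum.cong) auto
      also have "\<dots> = - (f ^ D)" using D1 by simp
      finally show "f ^ D + (\<Sum>k = 1..D. (if k = D then - (f ^ D) else 0) * f ^ (D - k)) = 0" by simp
    qed
    then have "f \<in> ?J" using cl unfolding integrally_closed_def by simp
    then have "f \<in> MI (satS F (pw S t))" unfolding Jeq using F by blast
    then have "ef \<in> satS F (pw S t)" unfolding f_def by (simp add: monom_in_MI)
    then obtain c where c: "c \<in> Fsupp F" "ef + c \<in> pw S t" unfolding satS_def by auto
    have "pw S t \<subseteq> pw (up A) t" using pw_mono[OF sub_satS] gp(1) by metis
    then have xin: "ef + c \<in> pw (up A) t" using c(2) by blast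
    have c_ij: "Poly_Mapping.lookup c i = 0" "Poly_Mapping.lookup c j = 0" using c(1) ij unfolding Fsupp_def by auto
    have dc: "degW (-F) c = 0" using c(1) by (simp add: degW_zero_iff)
    have dphi: "degW (-F) \<phi> = 0" using \<phi>F by (simp add: degW_zero_iff)
    have "degW (-F) (ef + c) = (D * t - 1) + 1"
      unfolding ef_def using ij dc dphi by (simp add: degW_add degW_nsm degW_ev)
    also have "\<dots> = D * t" using D1 t1 by (simp add: D' t')
    finally have dx: "degW (-F) (ef + c) = D * t" .
    have zx: "\<forall>l. l \<notin> F \<longrightarrow> l \<noteq> i \<longrightarrow> l \<noteq> j \<longrightarrow> Poly_Mapping.lookup (ef + c) l = 0"
      using c(1) \<phi>F unfolding ef_def Fsupp_def by (auto simp: lookup_add lookup_ev)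
    have xj: "Poly_Mapping.lookup (ef + c) j = 1"
      unfolding ef_def using \<open>i \<noteq> j\<close> phi_ij c_ij by (simp add: lookup_add lookup_ev)
    have xj1: "Poly_Mapping.lookup (ef + c) j \<le> 1" using xj by simp
    have "Poly_Mapping.lookup (ef + c) j = 0"
      by (rule jlemma[OF gp(2) uA[unfolded u_def] \<open>i \<noteq> j\<close> ij xin dx zx xj1])
    then show False using xj by simp
  qed
  then have "(monom u :: ('v, 'k) mpoly) \<in> MI (satS F S)" by (simp add: monom_in_MI)
  then show ?thesis using Icomp unfolding u_def D_def by (simp add: var_prod_monom)
qed

theorem proposition3p6:
  fixes I :: "('v::finite, 'k::field) mpoly set"
    and d :: "'v set \<Rightarrow> nat"
  assumes "monomial_ideal I"
    and "\<forall>F\<in>calF I. \<exists>A. (\<forall>a\<in>A. monom_deg a = d F) \<and> I_comp I F = ideal_gen (monom ` A)"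
  shows "(\<exists>t0. \<forall>t\<ge>t0. integrally_closed (symbolic_power I t)) \<longleftrightarrow>
         (\<forall>F\<in>calF I. \<forall>i j. i \<notin> F \<and> j \<notin> F \<longrightarrow> var i ^ (d F - 1) * var j \<in> I_comp I F)"
proof -
  obtain S where S: "upc S" "I = MI S" using monomialE_aux[OF assms(1)] by blast
  have "\<exists>Af. \<forall>F\<in>calF I. (\<forall>a\<in>Af F. monom_deg a = d F) \<and> I_comp I F = ideal_gen (monom ` Af F)"
    using assms(2) by (rule bchoice)
  then obtain Af where Af0: "\<forall>F\<in>calF I. (\<forall>a\<in>Af F. monom_deg a = d F) \<and> I_comp I F = ideal_gen (monom ` Af F)"
    by blast
  have Af: "\<And>F. F \<in> calF (MI S :: ('v, 'k) mpoly set) \<Longrightarrow>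
        (\<forall>a\<in>Af F. monom_deg a = d F) \<and> I_comp (MI S :: ('v, 'k) mpoly set) F = ideal_gen (monom ` Af F)"
    using Af0 S(2) by simp
  show ?thesis
  proof
    assume L: "\<exists>t0. \<forall>t\<ge>t0. integrally_closed (symbolic_power I t)"
    show "\<forall>F\<in>calF I. \<forall>i j. i \<notin> F \<and> j \<notin> F \<longrightarrow> var i ^ (d F - 1) * var j \<in> I_comp I F"
      using lhs_to_rhs[OF S(1) Af] L S(2) by blast
  next
    assume R: "\<forall>F\<in>calF I. \<forall>i j. i \<notin> F \<and> j \<notin> F \<longrightarrow> var i ^ (d F - 1) * var j \<in> I_comp I F"
    show "\<exists>t0. \<forall>t\<ge>t0. integrally_closed (symbolic_power I t)"
      using rhs_to_lhs[OF S(1) Af] R S(2) by blast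
  qed
qed


end
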